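(* For every fixed $k,K\in\mathbf{N}$ there is a finite set of permutations $P$ such that $$\{\pi\in S:\ \mathrm{al}(\pi)<K\ \&\ s_k(\pi)<K\}\subset P[H_k^+\cup H_k^-].$$
   Context: $S_n$ is the set of permutations of $[n]$, $S=\bigcup_n S_n$; $\pi\prec\rho$ means $\rho$ has a subsequence order-isomorphic to $\pi$; $\pi|A$ is the permutation order-isomorphic to the subsequence of $\pi$ at positions in $A$. Alternating: $\sigma(\{1,3,5,\dots\})>\sigma(\{2,4,6,\dots\})$. $\mathrm{al}(\pi)$ is the maximum length of an alternating $\sigma$ with $\sigma\prec\pi$ or $\sigma\prec\pi^{-1}$. For $\sigma\in S_n,\tau\in S_m$, $\sigma\oplus\tau\in S_{n+m}$ equals $\sigma(i)$ at $i\le n$ and $n+\tau(i-n)$ at $i>n$; $\sigma\ominus\tau$ equals $m+\sigma(i)$ at $i\le n$ and $\tau(i-n)$ at $i>n$. Up-(down-)indecomposable means not of the form $\sigma\oplus\tau$ ($\sigma\ominus\tau$) with both nonempty; $h^+(\pi)$ ($h^-(\pi)$) is the maximum length of a block in the unique decomposition of $\pi$ as a $\oplus$-sum of up-indecomposables ($\ominus$-sum of down-indecomposables). $H_k^\pm=\{\pi\in S:h^\pm(\pi)<k\}$. For $k\ge2$ and $\pi\in S_n$, $s_k(\pi)$ is the number $r$ of intervals in the greedy partition $I_1<\dots<I_r$ of $[n]$ where $I_1$ is the longest initial interval with $\pi|I_1\in H_k^+\cup H_k^-$, $I_2$ the longest following interval with $\pi|I_2\in H_k^+\cup H_k^-$,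 etc.; $s_1(\pi)=\infty$ by convention. Inflation: for $\sigma\in S_m$ and $\tau_i\in S_{n_i}$ ($i=1,\dots,m$), $\sigma[\tau_1,\dots,\tau_m]\in S_{n_1+\dots+n_m}$ is the permutation whose positions split into consecutive intervals of lengths $n_1,\dots,n_m$, such that the restriction to the $i$-th interval is order-isomorphic to $\tau_i$, and the $i$-th and $j$-th intervals' value sets are intervals of integers ordered as $\sigma(i)$ versus $\sigma(j)$ (i.e. each point of $\sigma$ is replaced by a small copy of $\tau_i$). For sets $P,Q\subset S$, $P[Q]=\{\pi[\sigma_1,\dots,\sigma_m]: m\in\mathbf{N},\ \pi\in P\cap S_m,\ \sigma_i\in Q\}$. *)

theory Defs
  imports Main "HOL-Library.Extended_Nat"
begin

text \<open>Permutations of [n] are represented 0-based as lists: a list xs is a permutation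
  of length n iff it is distinct and its set of values is {0..<n}.\<close>

definition is_perm :: "nat list \<Rightarrow> bool" where
  "is_perm xs \<longleftrightarrow> distinct xs \<and> set xs = {0..<length xs}"

definition std :: "nat list \<Rightarrow> nat list" where
  "std xs = map (\<lambda>x. card {y \<in> set xs. y < x}) xs"

text \<open>pi|A : pattern of pi at the positions in A (0-based positions).\<close>
definition restr :: "nat list \<Rightarrow> nat set \<Rightarrow> nat list" where
  "restr p A = std (nths p A)"

definition contained :: "nat list \<Rightarrow> nat list \<Rightarrow> bool" where
  "contained s p \<longleftrightarrow> (\<exists>A \<subseteq> {..<length p}. restr p A = s)"

definition inv_perm :: "nat list \<Rightarrow> nat list" where
  "inv_perm p = map (\<lambda>i. THE j. j < length p \<and> p ! j = i) [0..<length p]"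

text \<open>Alternating: values at odd (1-based) positions exceed values at even (1-based)
  positions; 0-based this means even indices beat odd indices.\<close>
definition alternating :: "nat list \<Rightarrow> bool" where
  "alternating s \<longleftrightarrow>
     (\<forall>i j. i < length s \<and> j < length s \<and> even i \<and> odd j \<longrightarrow> s ! j < s ! i)"

definition al :: "nat list \<Rightarrow> nat" where
  "al p = Max {length s | s. is_perm s \<and> alternating s \<and>
                             (contained s p \<or> contained s (inv_perm p))}"

definition oplus :: "nat list \<Rightarrow> nat list \<Rightarrow> nat list" where
  "oplus s t = s @ map (\<lambda>v. v + length s) t"

definition ominus :: "nat list \<Rightarrow> nat list \<Rightarrow> nat list" where
  "ominus s t = map (\<lambda>v. v + length t) s @ t"

definition up_indecomposable :: "nat list \<Rightarrow> bool" where
  "up_indecomposable p \<longleftrightarrow>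
     \<not> (\<exists>s t. is_perm s \<and> is_perm t \<and> s \<noteq> [] \<and> t \<noteq> [] \<and> p = oplus s t)"

definition down_indecomposable :: "nat list \<Rightarrow> bool" where
  "down_indecomposable p \<longleftrightarrow>
     \<not> (\<exists>s t. is_perm s \<and> is_perm t \<and> s \<noteq> [] \<and> t \<noteq> [] \<and> p = ominus s t)"

fun oplus_list :: "nat list list \<Rightarrow> nat list" where
  "oplus_list [] = []"
| "oplus_list (b # bs) = oplus b (oplus_list bs)"

fun ominus_list :: "nat list list \<Rightarrow> nat list" where
  "ominus_list [] = []"
| "ominus_list (b # bs) = ominus b (ominus_list bs)"

text \<open>h^+ (resp. h^-): maximal block length in the unique decomposition into
  up-(down-)indecomposable blocks (0 for the empty permutation).\<close>
definition h_plus :: "nat list \<Rightarrow> nat" where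
  "h_plus p = (THE m. \<exists>bs. p = oplus_list bs \<and>
       (\<forall>b \<in> set bs. is_perm b \<and> b \<noteq> [] \<and> up_indecomposable b) \<and>
       m = Max (insert 0 (length ` set bs)))"

definition h_minus :: "nat list \<Rightarrow> nat" where
  "h_minus p = (THE m. \<exists>bs. p = ominus_list bs \<and>
       (\<forall>b \<in> set bs. is_perm b \<and> b \<noteq> [] \<and> down_indecomposable b) \<and>
       m = Max (insert 0 (length ` set bs)))"

definition H_plus :: "nat \<Rightarrow> nat list set" where
  "H_plus k = {p. is_perm p \<and> h_plus p < k}"

definition H_minus :: "nat \<Rightarrow> nat list set" where
  "H_minus k = {p. is_perm p \<and> h_minus p < k}"

text \<open>Greedy partition count, applied to the remaining suffix of positions.
  The pattern of an interval is the standardisation of the corresponding sublist.\<close>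
function greedy :: "nat \<Rightarrow> nat list \<Rightarrow> nat" where
  "greedy k [] = 0"
| "greedy k (x # xs) =
     Suc (greedy k (drop (max 1 (GREATEST l. l \<le> length (x # xs) \<and>
                                std (take l (x # xs)) \<in> H_plus k \<union> H_minus k)) (x # xs)))"
  by pat_completeness auto
termination
  by (relation "measure (\<lambda>(k, xs). length xs)") auto

definition s_k :: "nat \<Rightarrow> nat list \<Rightarrow> enat" where
  "s_k k p = (if k \<le> 1 then \<infinity> else enat (greedy k p))"

definition inflate :: "nat list \<Rightarrow> nat list list \<Rightarrow> nat list" where
  "inflate s ts = concat (map (\<lambda>i. map (\<lambda>v. v +
        sum_list (map (\<lambda>l. length (ts ! l)) (filter (\<lambda>l. s ! l < s ! i) [0..<length s])))
        (ts ! i)) [0..<length s])"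

definition inflations :: "nat list set \<Rightarrow> nat list set \<Rightarrow> nat list set" where
  "inflations P Q = {inflate s ts | s ts. s \<in> P \<and> is_perm s \<and> length ts = length s \<and>
                        (\<forall>t \<in> set ts. t \<in> Q \<and> is_perm t \<and> t \<noteq> [])}"

end

theory Submission
  imports Defs
begin

lemma rank_lt:
  assumes "finite S" "x \<in> S" "y \<in> S" "x < y"
  shows "card {z\<in>S. z < x} < card {z\<in>S. z < (y::nat)}"
  apply (rule psubset_card_mono)
  using assms by auto

lemma rank_less_card:
  assumes "finite S" "x \<in> S"
  shows "card {z\<in>S. z < (x::nat)} < card S"
  apply (rule psubset_card_mono)
  using assms by auto

lemma std_length[simp]: "length (std xs) = length xs"
  by (simp add: std_def)

lemma std_nth: "i < length xs \<Longrightarrow> std xs ! i = card {y \<in> set xs. y < xs ! i}"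
  by (simp add: std_def)

lemma std_less_iff:
  assumes "distinct xs" "i < length xs" "j < length xs"
  shows "std xs ! i < std xs ! j \<longleftrightarrow> xs ! i < xs ! j"
proof
  assume "xs ! i < xs ! j"
  then show "std xs ! i < std xs ! j"
    using assms by (simp add: std_nth rank_lt)
next
  assume a: "std xs ! i < std xs ! j"
  show "xs ! i < xs ! j"
  proof (rule ccontr)
    assume "\<not> xs ! i < xs ! j"
    then have "xs ! j < xs ! i \<or> xs ! j = xs ! i" by auto
    then show False
    proof
      assume "xs ! j < xs ! i"
      then have "std xs ! j < std xs ! i" using assms by (simp add: std_nth rank_lt)
      then show False using a by simp
    next
      assume "xs ! j = xs ! i"
      then show False using a assms by (simp add: std_nth)
    qed
  qed
qed

lemma std_distinct:
  assumes "distinct xs" shows "distinct (std xs)"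
proof -
  have "inj_on (\<lambda>x. card {y \<in> set xs. y < x}) (set xs)"
  proof (rule inj_onI)
    fix x y assume "x \<in> set xs" "y \<in> set xs" "card {z \<in> set xs. z < x} = card {z \<in> set xs. z < y}"
    then show "x = y" using rank_lt[of "set xs" x y] rank_lt[of "set xs" y x]
      by (metis finite_set less_irrefl nat_neq_iff)
  qed
  then show ?thesis using assms by (simp add: std_def distinct_map)
qed

lemma std_perm:
  assumes "distinct xs" shows "is_perm (std xs)"
proof -
  have d: "distinct (std xs)" using std_distinct[OF assms] .
  have sub: "set (std xs) \<subseteq> {0..<length xs}"
    using rank_less_card[of "set xs"] assms by (auto simp: std_def distinct_card)
  have "card (set (std xs)) = length xs" using d distinct_card by fastforce
  then have "set (std xs) = {0..<length xs}"
    using sub by (metis card_atLeastLessThan card_subset_eq finite_atLeastLessThan minus_nat.diff_0)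
  then show ?thesis using d by (simp add: is_perm_def)
qed

lemma std_interval:
  assumes "set u = {lo..<lo + length u}"
  shows "std u = map (\<lambda>x. x - lo) u"
proof -
  have "\<And>x. x \<in> set u \<Longrightarrow> card {y \<in> set u. y < x} = x - lo"
  proof -
    fix x assume "x \<in> set u"
    then have "{y \<in> set u. y < x} = {lo..<x}" using assms by auto
    then show "card {y \<in> set u. y < x} = x - lo" by simp
  qed
  then show ?thesis by (simp add: std_def)
qed

lemma std_single[simp]: "std [x] = [0]"
  by (simp add: std_def)

lemma std_Nil[simp]: "std [] = []"
  by (simp add: std_def)

lemma std_append_less:
  assumes "distinct (xs @ ys)" "\<forall>x\<in>set xs. \<forall>y\<in>set ys. x < y"
  shows "std (xs @ ys) = oplus (std xs) (std ys)"
proof -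
  have 1: "\<And>x. x \<in> set xs \<Longrightarrow> {y \<in> set (xs@ys). y < x} = {y \<in> set xs. y < x}"
    using assms(2) by fastforce
  have 2: "\<And>z. z \<in> set ys \<Longrightarrow> card {y \<in> set (xs@ys). y < z} = length xs + card {y \<in> set ys. y < z}"
  proof -
    fix z assume z: "z \<in> set ys"
    have "{y \<in> set (xs@ys). y < z} = set xs \<union> {y \<in> set ys. y < z}"
      using assms(2) z by fastforce
    moreover have "set xs \<inter> {y \<in> set ys. y < z} = {}" using assms(1) by auto
    ultimately have "card {y \<in> set (xs@ys). y < z} = card (set xs) + card {y \<in> set ys. y < z}"
      by (simp add: card_Un_disjoint)
    then show "card {y \<in> set (xs@ys). y < z} = length xs + card {y \<in> set ys. y < z}"
      using assms(1) by (simp add: distinct_card)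
  qed
  show ?thesis
    unfolding oplus_def std_def using 1 2 by simp
qed

lemma std_append_greater:
  assumes "distinct (xs @ ys)" "\<forall>x\<in>set xs. \<forall>y\<in>set ys. y < x"
  shows "std (xs @ ys) = ominus (std xs) (std ys)"
proof -
  have 1: "\<And>x. x \<in> set ys \<Longrightarrow> {y \<in> set (xs@ys). y < x} = {y \<in> set ys. y < x}"
    using assms(2) by fastforce
  have 2: "\<And>z. z \<in> set xs \<Longrightarrow> card {y \<in> set (xs@ys). y < z} = length ys + card {y \<in> set xs. y < z}"
  proof -
    fix z assume z: "z \<in> set xs"
    have "{y \<in> set (xs@ys). y < z} = set ys \<union> {y \<in> set xs. y < z}"
      using assms(2) z by fastforce
    moreover have "set ys \<inter> {y \<in> set xs. y < z} = {}" using assms(1) by auto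
    ultimately have "card {y \<in> set (xs@ys). y < z} = card (set ys) + card {y \<in> set xs. y < z}"
      by (simp add: card_Un_disjoint)
    then show "card {y \<in> set (xs@ys). y < z} = length ys + card {y \<in> set xs. y < z}"
      using assms(1) by (simp add: distinct_card)
  qed
  show ?thesis
    unfolding ominus_def std_def using 1 2 by (simp add: add.commute)
qed


lemma is_perm_oplus:
  assumes "is_perm s" "is_perm t" shows "is_perm (oplus s t)"
proof -
  have "set (map (\<lambda>v. v + length s) t) = {length s..<length s + length t}"
    using assms(2) unfolding is_perm_def
    by (auto simp: image_iff intro!: bexI[where x="_ - length s"])
  moreover have "distinct (map (\<lambda>v. v + length s) t)"
    using assms(2) by (simp add: is_perm_def distinct_map)
  ultimately show ?thesis using assms unfolding is_perm_def oplus_def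
    by auto
qed

lemma is_perm_ominus:
  assumes "is_perm s" "is_perm t" shows "is_perm (ominus s t)"
proof -
  have "set (map (\<lambda>v. v + length t) s) = {length t..<length t + length s}"
    using assms(1) unfolding is_perm_def
    by (auto simp: image_iff intro!: bexI[where x="_ - length t"])
  moreover have "distinct (map (\<lambda>v. v + length t) s)"
    using assms(1) by (simp add: is_perm_def distinct_map)
  ultimately show ?thesis using assms unfolding is_perm_def ominus_def
    by auto
qed

definition valid_up :: "nat list list \<Rightarrow> bool" where
  "valid_up bs \<longleftrightarrow> (\<forall>b \<in> set bs. is_perm b \<and> b \<noteq> [] \<and> up_indecomposable b)"

definition valid_down :: "nat list list \<Rightarrow> bool" where
  "valid_down bs \<longleftrightarrow> (\<forall>b \<in> set bs. is_perm b \<and> b \<noteq> [] \<and> down_indecomposable b)"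

lemma oplus_list_perm: "\<forall>b\<in>set bs. is_perm b \<Longrightarrow> is_perm (oplus_list bs)"
  by (induction bs) (simp_all add: is_perm_oplus is_perm_def[of "[]"])

lemma ominus_list_perm: "\<forall>b\<in>set bs. is_perm b \<Longrightarrow> is_perm (ominus_list bs)"
  by (induction bs) (simp_all add: is_perm_ominus is_perm_def[of "[]"])

lemma perm_drop_shift:
  assumes "is_perm b'" "b' = b @ r" "is_perm b"
  shows "is_perm (map (\<lambda>v. v - length b) r) \<and> map (\<lambda>v. v + length b) (map (\<lambda>v. v - length b) r) = r"
proof -
  have sb: "set b = {0..<length b}" using assms(3) by (simp add: is_perm_def)
  have sb': "set b' = {0..<length b'}" and db': "distinct b'" using assms(1) by (auto simp: is_perm_def)
  have "set r = set b' - set b" using db' assms(2) by auto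
  then have "set r = {length b..<length b'}"
    using sb sb' by auto
  then have sr: "set r = {length b..<length b + length r}" using assms(2) by simp
  have ge: "\<forall>v\<in>set r. length b \<le> v" using sr by auto
  have eq: "map (\<lambda>v. v + length b) (map (\<lambda>v. v - length b) r) = r"
    using ge by (induction r) auto
  have dr: "distinct r" using db' assms(2) by simp
  have "distinct (map (\<lambda>v. v - length b) r)"
  proof -
    have "inj_on (\<lambda>v. v - length b) (set r)"
      using ge by (intro inj_onI) (metis le_add_diff_inverse2)
    then show ?thesis using dr by (simp add: distinct_map)
  qed
  moreover have "set (map (\<lambda>v. v - length b) r) = {0..<length r}"
    using sr by (auto simp: image_iff intro!: bexI[where x="_ + length b"])
  ultimately show ?thesis using eq by (simp add: is_perm_def)
qed

lemma oplus_cancel: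
  assumes "is_perm b" "b \<noteq> []" "up_indecomposable b"
      and "is_perm b'" "b' \<noteq> []" "up_indecomposable b'"
      and "oplus b X = oplus b' Y"
  shows "b = b' \<and> X = Y"
proof -
  have key: "\<And>b b' X Y. is_perm b \<Longrightarrow> b \<noteq> [] \<Longrightarrow> is_perm b' \<Longrightarrow> up_indecomposable b'
      \<Longrightarrow> oplus b X = oplus b' Y \<Longrightarrow> length b < length b' \<Longrightarrow> False"
  proof -
    fix b b' X Y :: "nat list"
    assume a: "is_perm b" "b \<noteq> []" "is_perm b'" "up_indecomposable b'"
      "oplus b X = oplus b' Y" "length b < length b'"
    have "take (length b) (oplus b X) = b" by (simp add: oplus_def)
    moreover have "take (length b) (oplus b' Y) = take (length b) b'"
      using a(6) by (simp add: oplus_def)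
    ultimately have tb: "take (length b) b' = b" using a(5) by simp
    define r where "r = drop (length b) b'"
    have b'eq: "b' = b @ r" using tb r_def by (metis append_take_drop_id)
    have rne: "r \<noteq> []" using a(6) r_def by simp
    from perm_drop_shift[OF a(3) b'eq a(1)]
    have "is_perm (map (\<lambda>v. v - length b) r)"
      "map (\<lambda>v. v + length b) (map (\<lambda>v. v - length b) r) = r" by auto
    then have "b' = oplus b (map (\<lambda>v. v - length b) r)"
      using b'eq by (simp add: oplus_def)
    then show False using a(4) a(1) a(2) rne \<open>is_perm (map (\<lambda>v. v - length b) r)\<close>
      unfolding up_indecomposable_def by force
  qed
  have "\<not> length b < length b'" using key assms by blast
  moreover have "\<not> length b' < length b" using key assms by metis
  ultimately have len: "length b = length b'" by simp
  have "take (length b) (oplus b X) = b" by (simp add: oplus_def)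
  moreover have "take (length b) (oplus b' Y) = b'" using len by (simp add: oplus_def)
  ultimately have beq: "b = b'" using assms(7) by simp
  then have "map (\<lambda>v. v + length b) X = map (\<lambda>v. v + length b) Y"
    using assms(7) by (simp add: oplus_def)
  then have "X = Y" by (simp add: inj_map_eq_map inj_on_def)
  then show ?thesis using beq by simp
qed

lemma oplus_list_unique:
  "valid_up bs \<Longrightarrow> valid_up bs' \<Longrightarrow> oplus_list bs = oplus_list bs' \<Longrightarrow> bs = bs'"
proof (induction bs arbitrary: bs')
  case Nil
  then show ?case by (cases bs') (auto simp: oplus_def valid_up_def)
next
  case (Cons b bs)
  then obtain b' bs'' where bs': "bs' = b' # bs''"
    by (cases bs') (auto simp: oplus_def valid_up_def)
  have "b = b' \<and> oplus_list bs = oplus_list bs''"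
    apply (rule oplus_cancel)
    using Cons.prems bs' by (auto simp: valid_up_def)
  then show ?case using Cons bs' by (auto simp: valid_up_def)
qed

lemma ominus_cancel:
  assumes "is_perm b" "b \<noteq> []" "down_indecomposable b"
      and "is_perm b'" "b' \<noteq> []" "down_indecomposable b'"
      and "ominus b X = ominus b' Y"
  shows "b = b' \<and> X = Y"
proof -
  have key: "\<And>b b' X Y. is_perm b \<Longrightarrow> b \<noteq> [] \<Longrightarrow> is_perm b' \<Longrightarrow> down_indecomposable b'
      \<Longrightarrow> ominus b X = ominus b' Y \<Longrightarrow> length b < length b' \<Longrightarrow> False"
  proof -
    fix b b' X Y :: "nat list"
    assume a: "is_perm b" "b \<noteq> []" "is_perm b'" "down_indecomposable b'"
      "ominus b X = ominus b' Y" "length b < length b'"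
    have lens: "length b + length X = length b' + length Y"
      using arg_cong[OF a(5), of length] by (simp add: ominus_def)
    define r where "r = drop (length b) b'"
    define b'' where "b'' = take (length b) b'"
    have b'eq: "b' = b'' @ r" by (simp add: r_def b''_def)
    have lr: "length r = length b' - length b" by (simp add: r_def)
    have lX: "length X = length Y + length r" using lens lr a(6) by simp
    have "take (length b) (ominus b X) = map (\<lambda>v. v + length X) b" by (simp add: ominus_def)
    moreover have "take (length b) (ominus b' Y) = map (\<lambda>v. v + length Y) b''"
      using a(6) by (simp add: ominus_def b''_def take_map)
    ultimately have "map (\<lambda>v. v + length X) b = map (\<lambda>v. v + length Y) b''" using a(5) by simp
    moreover have "map (\<lambda>v. v + length Y) (map (\<lambda>v. v + length r) b) = map (\<lambda>v. v + length X) b"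
      using lX by (simp add: algebra_simps)
    ultimately have "map (\<lambda>v. v + length Y) (map (\<lambda>v. v + length r) b) = map (\<lambda>v. v + length Y) b''"
      by simp
    then have b''eq: "b'' = map (\<lambda>v. v + length r) b"
      using inj_map_eq_map[of "\<lambda>v. v + length Y" "map (\<lambda>v. v + length r) b" b'']
      by (simp add: inj_on_def)
    have sb: "set b = {0..<length b}" using a(1) by (simp add: is_perm_def)
    have sb': "set b' = {0..<length b'}" and db': "distinct b'" using a(3) by (auto simp: is_perm_def)
    have lb'': "length b'' = length b" using a(6) by (simp add: b''_def)
    have sb'': "set b'' = {length r..<length r + length b}"
      using sb b''eq by (auto simp: image_iff intro!: bexI[where x="_ - length r"])
    have "set r = {0..<length r}"
    proof -
      have "set r \<subseteq> {0..<length b'}" using sb' b'eq by auto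
      moreover have "set r \<inter> set b'' = {}" using db' b'eq by auto
      ultimately have "set r \<subseteq> {0..<length r}"
      proof -
        assume s1: "set r \<subseteq> {0..<length b'}" and s2: "set r \<inter> set b'' = {}"
        show ?thesis
        proof
          fix x assume x: "x \<in> set r"
          then have "x < length b'" using s1 by auto
          moreover have "x \<notin> {length r..<length r + length b}" using s2 x sb'' by blast
          ultimately show "x \<in> {0..<length r}" using lr a(6) by auto
        qed
      qed
      moreover have "card (set r) = length r" using db' b'eq by (simp add: distinct_card)
      ultimately show ?thesis
        by (metis card_atLeastLessThan card_subset_eq finite_atLeastLessThan minus_nat.diff_0)
    qed
    then have pr: "is_perm r" using db' b'eq by (simp add: is_perm_def)
    have "b' = ominus b r" using b'eq b''eq by (simp add: ominus_def)
    moreover have "r \<noteq> []" using a(6) lr by auto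
    ultimately show False using a(4) a(1) a(2) pr
      unfolding down_indecomposable_def by force
  qed
  have "\<not> length b < length b'" using key assms by blast
  moreover have "\<not> length b' < length b" using key assms by metis
  ultimately have len: "length b = length b'" by simp
  have lens: "length b + length X = length b' + length Y"
    using arg_cong[OF assms(7), of length] by (simp add: ominus_def)
  then have lXY: "length X = length Y" using len by simp
  have "drop (length b) (ominus b X) = X" by (simp add: ominus_def)
  moreover have "drop (length b) (ominus b' Y) = Y" using len by (simp add: ominus_def)
  ultimately have XY: "X = Y" using assms(7) by simp
  have "take (length b) (ominus b X) = map (\<lambda>v. v + length X) b" by (simp add: ominus_def)
  moreover have "take (length b) (ominus b' Y) = map (\<lambda>v. v + length X) b'"
    using len lXY by (simp add: ominus_def)
  ultimately have "map (\<lambda>v. v + length X) b = map (\<lambda>v. v + length X) b'" using assms(7) by simp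
  then have "b = b'" by (simp add: inj_map_eq_map inj_on_def)
  then show ?thesis using XY by simp
qed

lemma ominus_list_unique:
  "valid_down bs \<Longrightarrow> valid_down bs' \<Longrightarrow> ominus_list bs = ominus_list bs' \<Longrightarrow> bs = bs'"
proof (induction bs arbitrary: bs')
  case Nil
  then show ?case by (cases bs') (auto simp: ominus_def valid_down_def)
next
  case (Cons b bs)
  then obtain b' bs'' where bs': "bs' = b' # bs''"
    by (cases bs') (auto simp: ominus_def valid_down_def)
  have "b = b' \<and> ominus_list bs = ominus_list bs''"
    apply (rule ominus_cancel)
    using Cons.prems bs' by (auto simp: valid_down_def)
  then show ?case using Cons bs' by (auto simp: valid_down_def)
qed


lemma img_shift: "(\<lambda>v. v - a) ` {a..<a+m} = {0..<(m::nat)}"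
proof (rule set_eqI)
  fix x
  show "x \<in> (\<lambda>v. v - a) ` {a..<a+m} \<longleftrightarrow> x \<in> {0..<m}"
  proof
    assume "x \<in> (\<lambda>v. v - a) ` {a..<a+m}" then show "x \<in> {0..<m}" by auto
  next
    assume "x \<in> {0..<m}"
    then have "x + a \<in> {a..<a+m}" "x = (x + a) - a" by auto
    then show "x \<in> (\<lambda>v. v - a) ` {a..<a+m}" by blast
  qed
qed

lemma img_add: "(\<lambda>v. v + a) ` {0..<m} = {a..<a+(m::nat)}"
proof (rule set_eqI)
  fix x
  show "x \<in> (\<lambda>v. v + a) ` {0..<m} \<longleftrightarrow> x \<in> {a..<a+m}"
  proof
    assume "x \<in> (\<lambda>v. v + a) ` {0..<m}" then show "x \<in> {a..<a+m}" by auto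
  next
    assume "x \<in> {a..<a+m}"
    then have "x - a \<in> {0..<m}" "x = (x - a) + a" by auto
    then show "x \<in> (\<lambda>v. v + a) ` {0..<m}" by blast
  qed
qed

lemma exists_up: "is_perm p \<Longrightarrow> \<exists>bs. valid_up bs \<and> p = oplus_list bs"
proof (induction "length p" arbitrary: p rule: less_induct)
  case less
  show ?case
  proof (cases "p = []")
    case True
    then show ?thesis by (intro exI[of _ "[]"]) (simp add: valid_up_def)
  next
    case False
    define n where "n = length p"
    define Q where "Q c \<longleftrightarrow> 0 < c \<and> c \<le> n \<and> set (take c p) = {0..<c}" for c
    have Qn: "Q n" using less.prems False by (simp add: Q_def n_def is_perm_def)
    define c where "c = (LEAST c. Q c)"
    have Qc: "Q c" using LeastI[of Q n] Qn c_def by simp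
    have minc: "\<And>c'. c' < c \<Longrightarrow> \<not> Q c'" using not_less_Least c_def by blast
    define b where "b = take c p"
    define r where "r = drop c p"
    have pbr: "p = b @ r" by (simp add: b_def r_def)
    have lb: "length b = c" using Qc by (simp add: b_def Q_def n_def)
    have pb: "is_perm b" using Qc less.prems lb by (simp add: b_def Q_def is_perm_def)
    from perm_drop_shift[OF less.prems pbr pb]
    have pt: "is_perm (map (\<lambda>v. v - length b) r)" and
      eq: "map (\<lambda>v. v + length b) (map (\<lambda>v. v - length b) r) = r" by auto
    define t where "t = map (\<lambda>v. v - length b) r"
    have poplus: "p = oplus b t" using pbr eq by (simp add: oplus_def t_def)
    have bne: "b \<noteq> []" using Qc lb by (auto simp: Q_def)
    have ind: "up_indecomposable b"
      unfolding up_indecomposable_def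
    proof
      assume "\<exists>s t. is_perm s \<and> is_perm t \<and> s \<noteq> [] \<and> t \<noteq> [] \<and> b = oplus s t"
      then obtain s t' where st: "is_perm s" "is_perm t'" "s \<noteq> []" "t' \<noteq> []" "b = oplus s t'" by blast
      have "take (length s) b = s" using st(5) by (simp add: oplus_def)
      moreover have ls: "length s < c"
      proof -
        have "length b = length s + length t'" using st(5) by (simp add: oplus_def)
        moreover have "0 < length t'" using st(4) by simp
        ultimately show ?thesis using lb by simp
      qed
      ultimately have "take (length s) p = s" using pbr lb by simp
      then have "Q (length s)" using st(1,3) ls Qc by (auto simp: Q_def is_perm_def)
      then show False using minc ls by blast
    qed
    have "length t < length p" using pbr bne by (simp add: t_def)
    then obtain bs where "valid_up bs" "t = oplus_list bs" using less.hyps pt t_def by blast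
    then show ?thesis using poplus pb bne ind
      by (intro exI[of _ "b # bs"]) (auto simp: valid_up_def)
  qed
qed

lemma exists_down: "is_perm p \<Longrightarrow> \<exists>bs. valid_down bs \<and> p = ominus_list bs"
proof (induction "length p" arbitrary: p rule: less_induct)
  case less
  show ?case
  proof (cases "p = []")
    case True
    then show ?thesis by (intro exI[of _ "[]"]) (simp add: valid_down_def)
  next
    case False
    define n where "n = length p"
    have sp: "set p = {0..<n}" and dp: "distinct p" using less.prems by (auto simp: is_perm_def n_def)
    define Q where "Q c \<longleftrightarrow> 0 < c \<and> c \<le> n \<and> set (take c p) = {n - c..<n}" for c
    have Qn: "Q n" using less.prems False by (simp add: Q_def n_def is_perm_def)
    define c where "c = (LEAST c. Q c)"
    have Qc: "Q c" using LeastI[of Q n] Qn c_def by simp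
    have minc: "\<And>c'. c' < c \<Longrightarrow> \<not> Q c'" using not_less_Least c_def by blast
    define b0 where "b0 = take c p"
    define r where "r = drop c p"
    have pbr: "p = b0 @ r" by (simp add: b0_def r_def)
    have lb0: "length b0 = c" using Qc by (simp add: b0_def Q_def n_def)
    have lr: "length r = n - c" by (simp add: r_def n_def)
    have sb0: "set b0 = {n - c..<n}" using Qc by (simp add: b0_def Q_def)
    have "set r = set p - set b0" using dp pbr by auto
    then have sr: "set r = {0..<length r}" using sp sb0 lr by auto
    have pr: "is_perm r" using sr dp pbr by (simp add: is_perm_def)
    define b where "b = map (\<lambda>v. v - length r) b0"
    have ge: "\<forall>v\<in>set b0. length r \<le> v" using sb0 lr by auto
    have b0eq: "map (\<lambda>v. v + length r) b = b0" unfolding b_def using ge by (induction b0) auto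
    have lb: "length b = c" using lb0 by (simp add: b_def)
    have pb: "is_perm b"
    proof -
      have "inj_on (\<lambda>v. v - length r) (set b0)"
        using ge by (intro inj_onI) (metis le_add_diff_inverse2)
      then have "distinct b" using dp pbr by (simp add: distinct_map b_def)
      moreover have "set b = {0..<length b}"
      proof -
        have "n = length r + c" using lr Qc by (simp add: Q_def)
        then have "set b = (\<lambda>v. v - length r) ` {length r..<length r + c}"
          using sb0 by (simp add: b_def)
        also have "\<dots> = {0..<c}" by (rule img_shift)
        finally show ?thesis using lb by simp
      qed
      ultimately show ?thesis by (simp add: is_perm_def)
    qed
    have pominus: "p = ominus b r" using pbr b0eq by (simp add: ominus_def)
    have bne: "b \<noteq> []" using Qc lb by (auto simp: Q_def)
    have ind: "down_indecomposable b"
      unfolding down_indecomposable_def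
    proof
      assume "\<exists>s t. is_perm s \<and> is_perm t \<and> s \<noteq> [] \<and> t \<noteq> [] \<and> b = ominus s t"
      then obtain s t' where st: "is_perm s" "is_perm t'" "s \<noteq> []" "t' \<noteq> []" "b = ominus s t'" by blast
      have tb: "take (length s) b = map (\<lambda>v. v + length t') s" using st(5) by (simp add: ominus_def)
      have ls: "length s < c"
      proof -
        have "length b = length s + length t'" using st(5) by (simp add: ominus_def)
        moreover have "0 < length t'" using st(4) by simp
        ultimately show ?thesis using lb by simp
      qed
      have lst: "length s + length t' = c" using st(5) lb by (simp add: ominus_def)
      have "take (length s) p = take (length s) b0" using pbr lb0 ls by simp
      also have "\<dots> = map (\<lambda>v. v + length r) (take (length s) b)" using b0eq by (metis take_map)
      finally have "set (take (length s) p) = (\<lambda>v. v + length r + length t') ` set s"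
        using tb by (simp add: image_image algebra_simps)
      also have "\<dots> = {length r + length t'..<length r + length t' + length s}"
        using st(1) img_add[of "length r + length t'" "length s"] by (simp add: is_perm_def add.assoc)
      also have "\<dots> = {n - length s..<n}"
        using lr lst ls Qc by (auto simp: Q_def)
      finally have "Q (length s)" using st(3) ls Qc by (auto simp: Q_def)
      then show False using minc ls by blast
    qed
    have "length r < length p" using pbr bne b0eq by auto
    then obtain bs where "valid_down bs" "r = ominus_list bs" using less.hyps pr by blast
    then show ?thesis using pominus pb bne ind
      by (intro exI[of _ "b # bs"]) (auto simp: valid_down_def)
  qed
qed

lemma Max_insert0_less:
  assumes "finite S" "1 \<le> (k::nat)"
  shows "Max (insert 0 S) < k \<longleftrightarrow> (\<forall>x\<in>S. x < k)"
  using assms by (auto simp: Max_less_iff)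

lemma H_plus_iff:
  assumes "1 \<le> k" "is_perm p"
  shows "p \<in> H_plus k \<longleftrightarrow> (\<exists>bs. valid_up bs \<and> p = oplus_list bs \<and> (\<forall>b\<in>set bs. length b < k))"
proof -
  obtain bs0 where b0: "valid_up bs0" "p = oplus_list bs0" using exists_up[OF assms(2)] by blast
  have "h_plus p = Max (insert 0 (length ` set bs0))"
    unfolding h_plus_def
  proof (rule the1_equality)
    show "\<exists>!m. \<exists>bs. p = oplus_list bs \<and> (\<forall>b\<in>set bs. is_perm b \<and> b \<noteq> [] \<and> up_indecomposable b) \<and>
        m = Max (insert 0 (length ` set bs))"
    proof (rule ex1I)
      show "\<exists>bs. p = oplus_list bs \<and> (\<forall>b\<in>set bs. is_perm b \<and> b \<noteq> [] \<and> up_indecomposable b) \<and>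
        Max (insert 0 (length ` set bs0)) = Max (insert 0 (length ` set bs))"
        using b0 by (auto simp: valid_up_def)
    next
      fix m assume "\<exists>bs. p = oplus_list bs \<and> (\<forall>b\<in>set bs. is_perm b \<and> b \<noteq> [] \<and> up_indecomposable b) \<and>
        m = Max (insert 0 (length ` set bs))"
      then obtain bs where "p = oplus_list bs" "valid_up bs" "m = Max (insert 0 (length ` set bs))"
        by (auto simp: valid_up_def)
      then show "m = Max (insert 0 (length ` set bs0))" using oplus_list_unique b0 by metis
    qed
  next
    show "\<exists>bs. p = oplus_list bs \<and> (\<forall>b\<in>set bs. is_perm b \<and> b \<noteq> [] \<and> up_indecomposable b) \<and>
        Max (insert 0 (length ` set bs0)) = Max (insert 0 (length ` set bs))"
      using b0 by (auto simp: valid_up_def)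
  qed
  then have "p \<in> H_plus k \<longleftrightarrow> (\<forall>b\<in>set bs0. length b < k)"
    using assms Max_insert0_less[of "length ` set bs0" k] by (auto simp: H_plus_def)
  also have "\<dots> \<longleftrightarrow> (\<exists>bs. valid_up bs \<and> p = oplus_list bs \<and> (\<forall>b\<in>set bs. length b < k))"
    using b0 oplus_list_unique by metis
  finally show ?thesis .
qed

lemma H_minus_iff:
  assumes "1 \<le> k" "is_perm p"
  shows "p \<in> H_minus k \<longleftrightarrow> (\<exists>bs. valid_down bs \<and> p = ominus_list bs \<and> (\<forall>b\<in>set bs. length b < k))"
proof -
  obtain bs0 where b0: "valid_down bs0" "p = ominus_list bs0" using exists_down[OF assms(2)] by blast
  have "h_minus p = Max (insert 0 (length ` set bs0))"
    unfolding h_minus_def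
  proof (rule the1_equality)
    show "\<exists>!m. \<exists>bs. p = ominus_list bs \<and> (\<forall>b\<in>set bs. is_perm b \<and> b \<noteq> [] \<and> down_indecomposable b) \<and>
        m = Max (insert 0 (length ` set bs))"
    proof (rule ex1I)
      show "\<exists>bs. p = ominus_list bs \<and> (\<forall>b\<in>set bs. is_perm b \<and> b \<noteq> [] \<and> down_indecomposable b) \<and>
        Max (insert 0 (length ` set bs0)) = Max (insert 0 (length ` set bs))"
        using b0 by (auto simp: valid_down_def)
    next
      fix m assume "\<exists>bs. p = ominus_list bs \<and> (\<forall>b\<in>set bs. is_perm b \<and> b \<noteq> [] \<and> down_indecomposable b) \<and>
        m = Max (insert 0 (length ` set bs))"
      then obtain bs where "p = ominus_list bs" "valid_down bs" "m = Max (insert 0 (length ` set bs))"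
        by (auto simp: valid_down_def)
      then show "m = Max (insert 0 (length ` set bs0))" using ominus_list_unique b0 by metis
    qed
  next
    show "\<exists>bs. p = ominus_list bs \<and> (\<forall>b\<in>set bs. is_perm b \<and> b \<noteq> [] \<and> down_indecomposable b) \<and>
        Max (insert 0 (length ` set bs0)) = Max (insert 0 (length ` set bs))"
      using b0 by (auto simp: valid_down_def)
  qed
  then have "p \<in> H_minus k \<longleftrightarrow> (\<forall>b\<in>set bs0. length b < k)"
    using assms Max_insert0_less[of "length ` set bs0" k] by (auto simp: H_minus_def)
  also have "\<dots> \<longleftrightarrow> (\<exists>bs. valid_down bs \<and> p = ominus_list bs \<and> (\<forall>b\<in>set bs. length b < k))"
    using b0 ominus_list_unique by metis
  finally show ?thesis .
qed


definition ordblocks :: "(nat \<Rightarrow> nat \<Rightarrow> bool) \<Rightarrow> nat list list \<Rightarrow> bool" where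
  "ordblocks ord cs \<longleftrightarrow> sorted_wrt (\<lambda>c c'. \<forall>x\<in>set c. \<forall>y\<in>set c'. ord x y) cs"

lemma oplus_inj_len:
  "oplus a b = oplus a' b' \<Longrightarrow> length a = length a' \<Longrightarrow> a = a' \<and> b = b'"
  by (auto simp: oplus_def inj_map_eq_map inj_on_def)

lemma ominus_inj_len:
  assumes "ominus a b = ominus a' b'" "length a = length a'"
  shows "a = a' \<and> b = b'"
proof -
  have lb: "length b = length b'" using arg_cong[OF assms(1), of length] assms(2) by (simp add: ominus_def)
  have "b = b'" using assms lb by (simp add: ominus_def)
  moreover have "map (\<lambda>v. v + length b) a = map (\<lambda>v. v + length b) a'"
    using assms lb by (simp add: ominus_def)
  then have "a = a'" by (simp add: inj_map_eq_map inj_on_def)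
  ultimately show ?thesis by simp
qed

lemma split_up:
  "distinct s \<Longrightarrow> std s = oplus_list bs \<Longrightarrow> \<forall>b\<in>set bs. is_perm b \<Longrightarrow>
    \<exists>cs. concat cs = s \<and> map std cs = bs \<and> ordblocks (<) cs"
proof (induction bs arbitrary: s)
  case Nil
  then have "s = []" by (metis oplus_list.simps(1) std_length length_0_conv)
  then show ?case by (auto simp: ordblocks_def)
next
  case (Cons b bs)
  define m where "m = length b"
  define X where "X = oplus_list bs"
  have sd: "std s = oplus b X" using Cons.prems by (simp add: X_def)
  have ls: "length s = m + length X" using arg_cong[OF sd, of length] by (simp add: oplus_def m_def)
  have pb: "is_perm b" using Cons.prems by simp
  have lt: "\<And>i j. i < m \<Longrightarrow> m \<le> j \<Longrightarrow> j < length s \<Longrightarrow> s ! i < s ! j"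
  proof -
    fix i j assume ij: "i < m" "m \<le> j" "j < length s"
    have "std s ! i = b ! i" using sd ij by (simp add: oplus_def nth_append m_def)
    moreover have "b ! i < m" using pb ij by (auto simp: is_perm_def m_def)
    moreover have "std s ! j = X ! (j - m) + m" using sd ij ls by (simp add: oplus_def nth_append m_def)
    ultimately have "std s ! i < std s ! j" by simp
    then show "s ! i < s ! j" using std_less_iff[OF Cons.prems(1)] ij by simp
  qed
  have sep: "\<forall>x\<in>set (take m s). \<forall>y\<in>set (drop m s). x < y"
  proof (intro ballI)
    fix x y assume "x \<in> set (take m s)" "y \<in> set (drop m s)"
    then obtain i j where "i < length (take m s)" "x = take m s ! i" "j < length (drop m s)" "y = drop m s ! j"
      by (auto simp: in_set_conv_nth)
    then show "x < y" using lt[of i "m + j"] ls by auto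
  qed
  have "std s = oplus (std (take m s)) (std (drop m s))"
    using std_append_less[of "take m s" "drop m s"] sep Cons.prems(1) by simp
  moreover have "length (std (take m s)) = length b" using ls by (simp add: m_def)
  ultimately have "std (take m s) = b \<and> std (drop m s) = X"
    using oplus_inj_len sd by metis
  then have eqs: "std (take m s) = b" "std (drop m s) = X" by auto
  obtain cs where cs: "concat cs = drop m s" "map std cs = bs" "ordblocks (<) cs"
    using Cons.IH[of "drop m s"] Cons.prems eqs X_def by auto
  show ?case
  proof (intro exI[of _ "take m s # cs"] conjI)
    show "concat (take m s # cs) = s" using cs by simp
    show "map std (take m s # cs) = b # bs" using cs eqs by simp
    have sep2: "\<forall>c\<in>set cs. \<forall>x\<in>set (take m s). \<forall>y\<in>set c. x < y"
      using sep unfolding cs(1)[symmetric] by auto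
    show "ordblocks (<) (take m s # cs)" using cs(3) sep2 by (auto simp: ordblocks_def)
  qed
qed

lemma split_down:
  "distinct s \<Longrightarrow> std s = ominus_list bs \<Longrightarrow> \<forall>b\<in>set bs. is_perm b \<Longrightarrow>
    \<exists>cs. concat cs = s \<and> map std cs = bs \<and> ordblocks (\<lambda>x y. y < x) cs"
proof (induction bs arbitrary: s)
  case Nil
  then have "s = []" by (metis ominus_list.simps(1) std_length length_0_conv)
  then show ?case by (auto simp: ordblocks_def)
next
  case (Cons b bs)
  define m where "m = length b"
  define X where "X = ominus_list bs"
  have sd: "std s = ominus b X" using Cons.prems by (simp add: X_def)
  have ls: "length s = m + length X" using arg_cong[OF sd, of length] by (simp add: ominus_def m_def)
  have pX: "is_perm X" using Cons.prems ominus_list_perm by (simp add: X_def)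
  have lt: "\<And>i j. i < m \<Longrightarrow> m \<le> j \<Longrightarrow> j < length s \<Longrightarrow> s ! j < s ! i"
  proof -
    fix i j assume ij: "i < m" "m \<le> j" "j < length s"
    have "std s ! i = b ! i + length X" using sd ij by (simp add: ominus_def nth_append m_def)
    moreover have "X ! (j - m) < length X" using pX ij ls by (auto simp: is_perm_def)
    moreover have "std s ! j = X ! (j - m)" using sd ij ls by (simp add: ominus_def nth_append m_def)
    ultimately have "std s ! j < std s ! i" by simp
    then show "s ! j < s ! i" using std_less_iff[OF Cons.prems(1)] ij by simp
  qed
  have sep: "\<forall>x\<in>set (take m s). \<forall>y\<in>set (drop m s). y < x"
  proof (intro ballI)
    fix x y assume "x \<in> set (take m s)" "y \<in> set (drop m s)"
    then obtain i j where "i < length (take m s)" "x = take m s ! i" "j < length (drop m s)" "y = drop m s ! j"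
      by (auto simp: in_set_conv_nth)
    then show "y < x" using lt[of i "m + j"] ls by auto
  qed
  have "std s = ominus (std (take m s)) (std (drop m s))"
    using std_append_greater[of "take m s" "drop m s"] sep Cons.prems(1) by simp
  moreover have "length (std (take m s)) = length b" using ls by (simp add: m_def)
  ultimately have "std (take m s) = b \<and> std (drop m s) = X"
    using ominus_inj_len sd by metis
  then have eqs: "std (take m s) = b" "std (drop m s) = X" by auto
  obtain cs where cs: "concat cs = drop m s" "map std cs = bs" "ordblocks (\<lambda>x y. y < x) cs"
    using Cons.IH[of "drop m s"] Cons.prems eqs X_def by auto
  show ?case
  proof (intro exI[of _ "take m s # cs"] conjI)
    show "concat (take m s # cs) = s" using cs by simp
    show "map std (take m s # cs) = b # bs" using cs eqs by simp
    have sep2: "\<forall>c\<in>set cs. \<forall>x\<in>set (take m s). \<forall>y\<in>set c. y < x"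
      using sep unfolding cs(1)[symmetric] by auto
    show "ordblocks (\<lambda>x y. y < x) (take m s # cs)" using cs(3) sep2 by (auto simp: ordblocks_def)
  qed
qed

lemma group_up:
  "distinct (concat g) \<Longrightarrow> ordblocks (<) g \<Longrightarrow> std (concat g) = oplus_list (map std g)"
proof (induction g)
  case Nil then show ?case by simp
next
  case (Cons c g)
  have "\<forall>x\<in>set c. \<forall>y\<in>set (concat g). x < y" using Cons.prems by (auto simp: ordblocks_def)
  then have "std (c @ concat g) = oplus (std c) (std (concat g))"
    using std_append_less Cons.prems by simp
  then show ?case using Cons by (simp add: ordblocks_def)
qed

lemma group_down:
  "distinct (concat g) \<Longrightarrow> ordblocks (\<lambda>x y. y < x) g \<Longrightarrow> std (concat g) = ominus_list (map std g)"
proof (induction g)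
  case Nil then show ?case by simp
next
  case (Cons c g)
  have "\<forall>x\<in>set c. \<forall>y\<in>set (concat g). y < x" using Cons.prems by (auto simp: ordblocks_def)
  then have "std (c @ concat g) = ominus (std c) (std (concat g))"
    using std_append_greater Cons.prems by simp
  then show ?case using Cons by (simp add: ordblocks_def)
qed

definition segstruct :: "nat \<Rightarrow> nat list \<Rightarrow> nat list list \<Rightarrow> (nat \<Rightarrow> nat \<Rightarrow> bool) \<Rightarrow> bool" where
  "segstruct k s cs ord \<longleftrightarrow> concat cs = s \<and> (\<forall>c\<in>set cs. c \<noteq> [] \<and> length c < k) \<and>
     (ord = (<) \<or> ord = (\<lambda>x y. y < x)) \<and> ordblocks ord cs \<and>
     (\<forall>A g C. A @ g @ C = cs \<longrightarrow> g \<noteq> [] \<longrightarrow> std (concat g) \<in> H_plus k \<union> H_minus k)"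

lemma ordblocks_mid:
  "ordblocks ord (A @ g @ C) \<Longrightarrow> ordblocks ord g"
  by (simp add: ordblocks_def sorted_wrt_append)

lemma segstruct_exists:
  assumes "1 \<le> k" "distinct s" "std s \<in> H_plus k \<union> H_minus k"
  shows "\<exists>cs ord. segstruct k s cs ord"
proof -
  have ps: "is_perm (std s)" using std_perm[OF assms(2)] .
  from assms(3) show ?thesis
  proof
    assume "std s \<in> H_plus k"
    then obtain bs where bs: "valid_up bs" "std s = oplus_list bs" "\<forall>b\<in>set bs. length b < k"
      using H_plus_iff[OF assms(1) ps] by blast
    obtain cs where cs: "concat cs = s" "map std cs = bs" "ordblocks (<) cs"
      using split_up[OF assms(2) bs(2)] bs(1) by (auto simp: valid_up_def)
    have "segstruct k s cs (<)"
      unfolding segstruct_def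
    proof (intro conjI allI impI)
      show "concat cs = s" by fact
      show "\<forall>c\<in>set cs. c \<noteq> [] \<and> length c < k"
      proof
        fix c assume c: "c \<in> set cs"
        then have "std c \<in> set bs" using cs(2) by auto
        then have "std c \<noteq> []" "length (std c) < k" using bs(1,3) by (auto simp: valid_up_def)
        then show "c \<noteq> [] \<and> length c < k" by auto
      qed
      show "(<) = (<) \<or> (<) = (\<lambda>x y::nat. y < x)" by simp
      show "ordblocks (<) cs" by fact
      fix A g C assume g: "A @ g @ C = cs" "g \<noteq> []"
      have dg: "distinct (concat g)" using assms(2) cs(1) g(1) by auto
      have og: "ordblocks (<) g" using ordblocks_mid cs(3) g(1) by metis
      have sg: "set (map std g) \<subseteq> set bs" using cs(2) g(1) by auto
      have vg: "valid_up (map std g)" using sg bs(1) by (auto simp: valid_up_def)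
      have lg: "\<forall>b\<in>set (map std g). length b < k" using sg bs(3) by blast
      have "\<exists>bs. valid_up bs \<and> std (concat g) = oplus_list bs \<and> (\<forall>b\<in>set bs. length b < k)"
        using group_up[OF dg og] vg lg by (intro exI[of _ "map std g"]) simp
      then have "std (concat g) \<in> H_plus k"
        using H_plus_iff[OF assms(1) std_perm[OF dg]] by simp
      then show "std (concat g) \<in> H_plus k \<union> H_minus k" by simp
    qed
    then show ?thesis by blast
  next
    assume "std s \<in> H_minus k"
    then obtain bs where bs: "valid_down bs" "std s = ominus_list bs" "\<forall>b\<in>set bs. length b < k"
      using H_minus_iff[OF assms(1) ps] by blast
    obtain cs where cs: "concat cs = s" "map std cs = bs" "ordblocks (\<lambda>x y. y < x) cs"
      using split_down[OF assms(2) bs(2)] bs(1) by (auto simp: valid_down_def)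
    have "segstruct k s cs (\<lambda>x y. y < x)"
      unfolding segstruct_def
    proof (intro conjI allI impI)
      show "concat cs = s" by fact
      show "\<forall>c\<in>set cs. c \<noteq> [] \<and> length c < k"
      proof
        fix c assume c: "c \<in> set cs"
        then have "std c \<in> set bs" using cs(2) by auto
        then have "std c \<noteq> []" "length (std c) < k" using bs(1,3) by (auto simp: valid_down_def)
        then show "c \<noteq> [] \<and> length c < k" by auto
      qed
      show "(\<lambda>x y::nat. y < x) = (<) \<or> (\<lambda>x y::nat. y < x) = (\<lambda>x y. y < x)" by simp
      show "ordblocks (\<lambda>x y. y < x) cs" by fact
      fix A g C assume g: "A @ g @ C = cs" "g \<noteq> []"
      have dg: "distinct (concat g)" using assms(2) cs(1) g(1) by auto
      have og: "ordblocks (\<lambda>x y. y < x) g" using ordblocks_mid cs(3) g(1) by metis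
      have sg: "set (map std g) \<subseteq> set bs" using cs(2) g(1) by auto
      have vg: "valid_down (map std g)" using sg bs(1) by (auto simp: valid_down_def)
      have lg: "\<forall>b\<in>set (map std g). length b < k" using sg bs(3) by blast
      have "\<exists>bs. valid_down bs \<and> std (concat g) = ominus_list bs \<and> (\<forall>b\<in>set bs. length b < k)"
        using group_down[OF dg og] vg lg by (intro exI[of _ "map std g"]) simp
      then have "std (concat g) \<in> H_minus k"
        using H_minus_iff[OF assms(1) std_perm[OF dg]] by simp
      then show "std (concat g) \<in> H_plus k \<union> H_minus k" by simp
    qed
    then show ?thesis by blast
  qed
qed


fun U :: "(nat list \<Rightarrow> bool) \<Rightarrow> nat list list \<Rightarrow> nat list list \<Rightarrow> nat list list" where
  "U bad g [] = (if g = [] then [] else [concat g])"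
| "U bad g (c # cs) = (if bad c then (if g = [] then [] else [concat g]) @ map (\<lambda>x. [x]) c @ U bad [] cs
     else U bad (g @ [c]) cs)"

lemma concat_singletons[simp]: "concat (map (\<lambda>x. [x]) c) = c"
  by (induction c) auto

lemma U_concat: "concat (U bad g cs) = concat g @ concat cs"
  by (induction bad g cs rule: U.induct) auto

lemma U_length:
  "\<forall>c\<in>set cs. length c \<le> k \<Longrightarrow> length (U bad g cs) \<le> 1 + (k + 1) * length (filter bad cs)"
proof (induction bad g cs rule: U.induct)
  case (1 bad g)
  then show ?case by simp
next
  case (2 bad g c cs)
  show ?case
  proof (cases "bad c")
    case True
    have "length (U bad [] cs) \<le> 1 + (k + 1) * length (filter bad cs)"
      using 2 True by simp
    moreover have "length c \<le> k" using "2.prems" by simp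
    moreover have "length ((if g = [] then [] else [concat g]) :: nat list list) \<le> 1" by simp
    ultimately show ?thesis using True by (simp add: algebra_simps)
  next
    case False
    then show ?thesis using 2 by simp
  qed
qed

lemma U_units:
  "\<forall>c\<in>set g. \<not> bad c \<Longrightarrow> u \<in> set (U bad g cs) \<Longrightarrow>
    (\<exists>x. u = [x] \<and> x \<in> set (concat cs)) \<or>
    (\<exists>A' g' C. A' @ g' @ C = A @ g @ cs \<and> u = concat g' \<and> g' \<noteq> [] \<and> (\<forall>c\<in>set g'. \<not> bad c))"
proof (induction bad g cs arbitrary: A rule: U.induct)
  case (1 bad g)
  then have "u = concat g" "g \<noteq> []" by (auto split: if_splits)
  then show ?case using "1.prems" by (intro disjI2 exI[of _ A] exI[of _ g] exI[of _ "[]"]) auto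
next
  case (2 bad g c cs)
  show ?case
  proof (cases "bad c")
    case True
    then have "u \<in> set (if g = [] then [] else [concat g]) \<or> u \<in> set (map (\<lambda>x. [x]) c) \<or>
      u \<in> set (U bad [] cs)" using "2.prems" by auto
    then show ?thesis
    proof (elim disjE)
      assume "u \<in> set (if g = [] then [] else [concat g])"
      then have "u = concat g" "g \<noteq> []" by (auto split: if_splits)
      then show ?thesis using "2.prems"
        by (intro disjI2 exI[of _ A] exI[of _ g] exI[of _ "c # cs"]) auto
    next
      assume "u \<in> set (map (\<lambda>x. [x]) c)"
      then show ?thesis by auto
    next
      assume "u \<in> set (U bad [] cs)"
      then have "(\<exists>x. u = [x] \<and> x \<in> set (concat cs)) \<or>
        (\<exists>A' g' C. A' @ g' @ C = (A @ g @ [c]) @ [] @ cs \<and> u = concat g' \<and> g' \<noteq> [] \<and> (\<forall>c\<in>set g'. \<not> bad c))"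
        using "2.IH"(1)[OF True, of "A @ g @ [c]"] by simp
      then show ?thesis by auto
    qed
  next
    case False
    have "(\<exists>x. u = [x] \<and> x \<in> set (concat cs)) \<or>
        (\<exists>A' g' C. A' @ g' @ C = A @ (g @ [c]) @ cs \<and> u = concat g' \<and> g' \<noteq> [] \<and> (\<forall>c\<in>set g'. \<not> bad c))"
      using "2.IH"(2)[OF False, of A] "2.prems" False by simp
    then show ?thesis by auto
  qed
qed

lemma block_unique:
  "distinct (concat cs) \<Longrightarrow> c \<in> set cs \<Longrightarrow> c' \<in> set cs \<Longrightarrow> x \<in> set c \<Longrightarrow> x \<in> set c' \<Longrightarrow> c = c'"
  by (induction cs) auto

lemma distinct_blocks:
  "distinct (concat cs) \<Longrightarrow> \<forall>c\<in>set cs. c \<noteq> [] \<Longrightarrow> distinct cs"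
proof (induction cs)
  case Nil then show ?case by simp
next
  case (Cons c cs)
  have "c \<notin> set cs"
  proof
    assume "c \<in> set cs"
    moreover obtain x where "x \<in> set c" using Cons.prems by (cases c) auto
    ultimately have "x \<in> set (concat cs)" by auto
    then show False using Cons.prems \<open>x \<in> set c\<close> by auto
  qed
  then show ?case using Cons by auto
qed

lemma filter_bad_card:
  assumes "distinct (concat cs)" "\<forall>c\<in>set cs. c \<noteq> []" "finite X"
  shows "length (filter (\<lambda>c. set c \<inter> X \<noteq> {}) cs) \<le> card X"
proof -
  let ?F = "filter (\<lambda>c. set c \<inter> X \<noteq> {}) cs"
  have d: "distinct ?F" using distinct_blocks[OF assms(1,2)] by simp
  define f where "f c = (SOME x. x \<in> set c \<inter> X)" for c
  have fin: "\<And>c. c \<in> set ?F \<Longrightarrow> f c \<in> set c \<inter> X"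
    unfolding f_def by (rule someI_ex) auto
  have "inj_on f (set ?F)"
  proof (rule inj_onI)
    fix c c' assume "c \<in> set ?F" "c' \<in> set ?F" "f c = f c'"
    then have a: "f c \<in> set c" "f c \<in> set c'" "c \<in> set cs" "c' \<in> set cs" using fin[of c] fin[of c'] by auto
    show "c = c'" using block_unique[OF assms(1) a(3,4) a(1,2)] .
  qed
  moreover have "f ` set ?F \<subseteq> X" using fin by auto
  ultimately have "card (set ?F) \<le> card X" using assms(3) by (metis card_inj_on_le)
  then show ?thesis using d by (metis distinct_card)
qed

lemma sw_app: "sorted_wrt P (xs @ ys) \<Longrightarrow> x \<in> set xs \<Longrightarrow> y \<in> set ys \<Longrightarrow> P x y"
  by (simp add: sorted_wrt_append)

lemma sw_right: "sorted_wrt P (xs @ ys) \<Longrightarrow> sorted_wrt P ys"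
  by (simp add: sorted_wrt_append)

lemma contig:
  fixes ord :: "nat \<Rightarrow> nat \<Rightarrow> bool"
  assumes dist: "distinct s" and sub: "set s \<subseteq> {..<n}" and cs: "concat cs = s"
    and ord: "ord = (<) \<or> ord = (\<lambda>x y. y < x)" and ob: "ordblocks ord cs"
    and g: "A @ g @ C = cs" and gne: "concat g \<noteq> []"
    and good: "\<forall>c\<in>set g. set c \<inter> {v \<in> set s. v + 1 < n \<and> v + 1 \<notin> set s} = {}"
  shows "set (concat g) = {Min (set (concat g))..<Min (set (concat g)) + length (concat g)}"
proof -
  define X where "X = {v \<in> set s. v + 1 < n \<and> v + 1 \<notin> set s}"
  define UU where "UU = set (concat g)"
  have finU: "finite UU" and neU: "UU \<noteq> {}" using gne by (auto simp: UU_def)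
  define lo where "lo = Min UU"
  define hi where "hi = Max UU"
  have loU: "lo \<in> UU" and hiU: "hi \<in> UU" using finU neU by (auto simp: lo_def hi_def)
  have lole: "\<And>x. x \<in> UU \<Longrightarrow> lo \<le> x" and lehi: "\<And>x. x \<in> UU \<Longrightarrow> x \<le> hi"
    using finU by (auto simp: lo_def hi_def)
  have Us: "UU \<subseteq> set s" using g cs by (auto simp: UU_def)
  have dcs: "distinct (concat cs)" using cs dist by simp
  let ?P = "\<lambda>c c'. \<forall>x\<in>set c. \<forall>y\<in>set c'. ord x y"
  have sw: "sorted_wrt ?P (A @ g @ C)" using ob g by (simp add: ordblocks_def)
  have GC: "\<And>a b. a \<in> set g \<Longrightarrow> b \<in> set C \<Longrightarrow> ?P a b"
    using sw_app[OF sw_right[OF sw]] .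
  have AG: "\<And>a b. a \<in> set A \<Longrightarrow> b \<in> set g \<Longrightarrow> ?P a b"
  proof -
    fix a b assume ab: "a \<in> set A" "b \<in> set g"
    then have "b \<in> set (g @ C)" by simp
    then show "?P a b" by (rule sw_app[OF sw ab(1)])
  qed
  have betw: "\<And>c x y z. c \<in> set cs \<Longrightarrow> x \<in> set c \<Longrightarrow> y \<in> UU \<Longrightarrow> z \<in> UU \<Longrightarrow> y < x \<Longrightarrow> x < z
      \<Longrightarrow> c \<in> set g"
  proof -
    fix c x y z assume a: "c \<in> set cs" "x \<in> set c" "y \<in> UU" "z \<in> UU" "y < x" "x < z"
    obtain cy where cy: "cy \<in> set g" "y \<in> set cy" using a(3) by (auto simp: UU_def)
    obtain cz where cz: "cz \<in> set g" "z \<in> set cz" using a(4) by (auto simp: UU_def)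
    have "c \<notin> set A"
    proof
      assume "c \<in> set A"
      then have "?P c cy" "?P c cz" using AG cy(1) cz(1) by blast+
      then have "ord x y" "ord x z" using cy(2) cz(2) a(2) by blast+
      then show False using ord a(5,6) by auto
    qed
    moreover have "c \<notin> set C"
    proof
      assume "c \<in> set C"
      then have "?P cy c" "?P cz c" using GC cy(1) cz(1) by blast+
      then have "ord y x" "ord z x" using cy(2) cz(2) a(2) by blast+
      then show False using ord a(5,6) by auto
    qed
    ultimately show "c \<in> set g" using a(1) g by auto
  qed
  have fill: "\<And>w. lo \<le> w \<Longrightarrow> w \<le> hi \<Longrightarrow> w \<in> UU"
  proof (rule ccontr)
    fix w assume w: "lo \<le> w" "w \<le> hi" "w \<notin> UU"
    have "lo \<noteq> w" "hi \<noteq> w" using w(3) loU hiU by blast+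
    then have w2: "lo < w" "w < hi" using w(1,2) by linarith+
    show False
    proof (cases "w \<in> set s")
      case True
      then have "w \<in> set (concat cs)" using cs by simp
      then obtain c where c: "c \<in> set cs" "w \<in> set c" by auto
      have "c \<in> set g" by (rule betw[OF c(1) c(2) loU hiU w2(1) w2(2)])
      then show False using c w(3) by (auto simp: UU_def)
    next
      case False
      define S' where "S' = {v \<in> set s. v < w}"
      have finS: "finite S'" by (simp add: S'_def)
      have loS: "lo \<in> S'" using loU Us w2 by (auto simp: S'_def)
      define u0 where "u0 = Max S'"
      have u0S: "u0 \<in> S'" unfolding u0_def using finS loS by (intro Max_in) auto
      have lou0: "lo \<le> u0" using finS loS by (simp add: u0_def)
      have u0s: "u0 \<in> set s" "u0 < w" using u0S by (auto simp: S'_def)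
      have "u0 + 1 \<notin> set s"
      proof
        assume a: "u0 + 1 \<in> set s"
        then have "u0 + 1 \<noteq> w" using False by auto
        then have "u0 + 1 < w" using u0s by simp
        then have "u0 + 1 \<in> S'" using a by (simp add: S'_def)
        then have "u0 + 1 \<le> u0" using finS by (simp add: u0_def)
        then show False by simp
      qed
      moreover have "u0 + 1 < n"
      proof -
        have "hi \<in> set s" using hiU Us by blast
        then have "hi < n" using sub by blast
        then show ?thesis using u0s(2) w2(2) by linarith
      qed
      ultimately have u0X: "u0 \<in> X" using u0s by (simp add: X_def)
      have "u0 \<in> set (concat cs)" using cs u0s by simp
      then obtain c where c: "c \<in> set cs" "u0 \<in> set c" by auto
      have "c \<in> set g"
      proof (cases "u0 = lo")
        case True
        obtain c' where c': "c' \<in> set g" "lo \<in> set c'" using loU by (auto simp: UU_def)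
        then have "c' \<in> set cs" using g by auto
        moreover have "lo \<in> set c" using c(2) True by simp
        ultimately have "c = c'" using block_unique[OF dcs c(1) _ _ c'(2)] by blast
        then show ?thesis using c' by simp
      next
        case False
        then have "lo < u0" using lou0 by simp
        moreover have "u0 < hi" using u0s(2) w2(2) by linarith
        ultimately show ?thesis by (rule betw[OF c(1) c(2) loU hiU])
      qed
      then have "set c \<inter> X = {}" unfolding X_def by (rule bspec[OF good])
      then show False using c(2) u0X by blast
    qed
  qed
  have "UU = {lo..hi}"
  proof (rule set_eqI)
    fix x show "x \<in> UU \<longleftrightarrow> x \<in> {lo..hi}"
      using fill[of x] lole[of x] lehi[of x] by auto
  qed
  moreover have "card UU = length (concat g)"
  proof -
    have "distinct (concat g)" using dcs g by auto
    then show ?thesis unfolding UU_def by (rule distinct_card)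
  qed
  moreover have "lo \<le> hi" using loU lehi by blast
  ultimately have "hi + 1 = lo + length (concat g)" by simp
  then have "{lo..hi} = {lo..<lo + length (concat g)}" by auto
  then show ?thesis using \<open>UU = {lo..hi}\<close> by (simp add: UU_def lo_def)
qed

lemma single_H: "2 \<le> k \<Longrightarrow> [0] \<in> H_plus k"
proof -
  assume k: "2 \<le> k"
  have p0: "is_perm [0]" by (simp add: is_perm_def)
  have "up_indecomposable [0]"
    unfolding up_indecomposable_def oplus_def
  proof
    assume "\<exists>s t. is_perm s \<and> is_perm t \<and> s \<noteq> [] \<and> t \<noteq> [] \<and> [0] = s @ map (\<lambda>v. v + length s) t"
    then obtain s t where "s \<noteq> []" "t \<noteq> []" "[0] = s @ map (\<lambda>v. v + length s) t" by blast
    then show False by (cases s; cases t) auto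
  qed
  then have "valid_up [[0]]" using p0 by (simp add: valid_up_def)
  moreover have "[0] = oplus_list [[0]]" by (simp add: oplus_def)
  ultimately show ?thesis using H_plus_iff[of k "[0]"] k p0 by fastforce
qed

lemma segment_units:
  assumes k: "2 \<le> k" and dist: "distinct s" and sub: "set s \<subseteq> {..<n}"
    and H: "std s \<in> H_plus k \<union> H_minus k"
  shows "\<exists>us. concat us = s \<and> length us \<le> 1 + (k + 1) * card {v \<in> set s. v + 1 < n \<and> v + 1 \<notin> set s} \<and>
    (\<forall>u\<in>set us. u \<noteq> [] \<and> set u = {Min (set u)..<Min (set u) + length u} \<and> std u \<in> H_plus k \<union> H_minus k)"
proof -
  define X where "X = {v \<in> set s. v + 1 < n \<and> v + 1 \<notin> set s}"
  obtain cs ord where ss: "segstruct k s cs ord" using segstruct_exists[OF _ dist H] k by auto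
  have cs: "concat cs = s" and cne: "\<forall>c\<in>set cs. c \<noteq> [] \<and> length c < k"
    and ord: "ord = (<) \<or> ord = (\<lambda>x y. y < x)" and ob: "ordblocks ord cs"
    and gH: "\<And>A g C. A @ g @ C = cs \<Longrightarrow> g \<noteq> [] \<Longrightarrow> std (concat g) \<in> H_plus k \<union> H_minus k"
    using ss unfolding segstruct_def by blast+
  define bad where "bad c \<longleftrightarrow> set c \<inter> X \<noteq> {}" for c
  define us where "us = U bad [] cs"
  have "concat us = s" using U_concat cs by (simp add: us_def)
  moreover have "length us \<le> 1 + (k + 1) * card X"
  proof -
    have "length us \<le> 1 + (k + 1) * length (filter bad cs)"
      unfolding us_def by (rule U_length) (use cne in auto)
    moreover have "length (filter bad cs) \<le> card X"
      unfolding bad_def by (rule filter_bad_card) (use cs dist cne in \<open>auto simp: X_def\<close>)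
    moreover have "(k + 1) * length (filter bad cs) \<le> (k + 1) * card X"
      using calculation(2) by (rule mult_le_mono2)
    ultimately show ?thesis by linarith
  qed
  moreover have "\<forall>u\<in>set us. u \<noteq> [] \<and> set u = {Min (set u)..<Min (set u) + length u} \<and> std u \<in> H_plus k \<union> H_minus k"
  proof
    fix u assume "u \<in> set us"
    then have "(\<exists>x. u = [x] \<and> x \<in> set (concat cs)) \<or>
      (\<exists>A' g' C. A' @ g' @ C = [] @ [] @ cs \<and> u = concat g' \<and> g' \<noteq> [] \<and> (\<forall>c\<in>set g'. \<not> bad c))"
      using U_units[of "[]" bad u cs "[]"] by (simp add: us_def)
    then show "u \<noteq> [] \<and> set u = {Min (set u)..<Min (set u) + length u} \<and> std u \<in> H_plus k \<union> H_minus k"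
    proof
      assume "\<exists>x. u = [x] \<and> x \<in> set (concat cs)"
      then obtain x where "u = [x]" by blast
      then show ?thesis using single_H[OF k] by auto
    next
      assume "\<exists>A' g' C. A' @ g' @ C = [] @ [] @ cs \<and> u = concat g' \<and> g' \<noteq> [] \<and> (\<forall>c\<in>set g'. \<not> bad c)"
      then obtain A' g' C where g': "A' @ g' @ C = cs" "u = concat g'" "g' \<noteq> []" "\<forall>c\<in>set g'. \<not> bad c"
        by auto
      have une: "u \<noteq> []"
      proof -
        obtain c where "c \<in> set g'" using g'(3) by (cases g') auto
        then have "c \<noteq> []" "c \<in> set cs" using cne g'(1) by auto
        then show ?thesis using g'(2) \<open>c \<in> set g'\<close> by auto
      qed
      have gg: "\<forall>c\<in>set g'. set c \<inter> {v \<in> set s. v + 1 < n \<and> v + 1 \<notin> set s} = {}"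
        using g'(4) unfolding bad_def X_def by blast
      have "set (concat g') = {Min (set (concat g'))..<Min (set (concat g')) + length (concat g')}"
        using contig[OF dist sub cs ord ob g'(1) _ gg] une g'(2) by blast
      then have "set u = {Min (set u)..<Min (set u) + length u}" using g'(2) by simp
      then show ?thesis using une gH[OF g'(1,3)] g'(2) by simp
    qed
  qed
  ultimately show ?thesis unfolding X_def by blast
qed


lemma empty_H: "1 \<le> k \<Longrightarrow> [] \<in> H_plus k"
proof -
  assume k: "1 \<le> k"
  have "is_perm []" by (simp add: is_perm_def)
  moreover have "valid_up []" by (simp add: valid_up_def)
  ultimately show ?thesis using H_plus_iff[of k "[]"] k by fastforce
qed

lemma greedy_segs:
  "2 \<le> k \<Longrightarrow> \<exists>segs. length segs = greedy k xs \<and> concat segs = xs \<and>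
     (\<forall>s\<in>set segs. s \<noteq> [] \<and> std s \<in> H_plus k \<union> H_minus k)"
proof (induction k xs rule: greedy.induct)
  case (1 k)
  then show ?case by (intro exI[of _ "[]"]) simp
next
  case (2 k x xs)
  define ys where "ys = x # xs"
  define Q where "Q l \<longleftrightarrow> l \<le> length ys \<and> std (take l ys) \<in> H_plus k \<union> H_minus k" for l
  define l where "l = (GREATEST l. Q l)"
  have Q0: "Q 0" using empty_H "2.prems" by (simp add: Q_def)
  have Ql: "Q l" unfolding l_def by (rule GreatestI_nat[of Q 0 "length ys"]) (use Q0 in \<open>auto simp: Q_def\<close>)
  define m where "m = max 1 l"
  define seg where "seg = take m ys"
  have segH: "seg \<noteq> [] \<and> std seg \<in> H_plus k \<union> H_minus k"
  proof (cases "l = 0")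
    case True
    then have "seg = [x]" by (simp add: seg_def m_def ys_def)
    then show ?thesis using single_H "2.prems" by simp
  next
    case False
    then have "seg = take l ys" "m = l" by (simp_all add: seg_def m_def)
    then show ?thesis using Ql False by (auto simp: Q_def ys_def)
  qed
  obtain segs where segs: "length segs = greedy k (drop m ys)" "concat segs = drop m ys"
     "\<forall>s\<in>set segs. s \<noteq> [] \<and> std s \<in> H_plus k \<union> H_minus k"
    using "2.IH" "2.prems" unfolding m_def l_def Q_def ys_def by blast
  have "greedy k ys = Suc (greedy k (drop m ys))"
    unfolding m_def l_def Q_def ys_def by simp
  then show ?case using segs segH
    by (intro exI[of _ "seg # segs"]) (auto simp: seg_def ys_def)
qed

lemma inv_perm_prop:
  assumes "is_perm p" "v < length p"
  shows "inv_perm p ! v < length p \<and> p ! (inv_perm p ! v) = v"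
proof -
  have e: "\<exists>!j. j < length p \<and> p ! j = v"
  proof -
    have "v \<in> set p" using assms by (simp add: is_perm_def)
    then obtain j where "j < length p" "p ! j = v" by (auto simp: in_set_conv_nth)
    moreover have "\<And>j'. j' < length p \<Longrightarrow> p ! j' = v \<Longrightarrow> j' = j"
      using assms(1) calculation by (auto simp: is_perm_def nth_eq_iff_index_eq)
    ultimately show ?thesis by blast
  qed
  have "inv_perm p ! v = (THE j. j < length p \<and> p ! j = v)"
    using assms(2) by (simp add: inv_perm_def)
  then show ?thesis using theI'[OF e] by simp
qed

lemma length_inv_perm[simp]: "length (inv_perm p) = length p"
  by (simp add: inv_perm_def)

lemma nths_upt_mono:
  assumes mono: "\<And>i j. i < j \<Longrightarrow> j < L \<Longrightarrow> w i < w j" and lt: "\<And>t. t < L \<Longrightarrow> w t < n"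
  shows "nths [0..<n] (w ` {..<L}) = map w [0..<L]"
proof (rule sorted_distinct_set_unique)
  show "sorted (nths [0..<n] (w ` {..<L}))" by (rule sorted_nths) simp
  show "distinct (nths [0..<n] (w ` {..<L}))" by simp
  show "sorted (map w [0..<L])"
    unfolding sorted_iff_nth_mono using mono by (auto simp: order.order_iff_strict)
  show "distinct (map w [0..<L])"
    unfolding distinct_map using mono by (auto simp: inj_on_def) (metis linorder_neqE_nat less_irrefl)
  have "set (nths [0..<n] (w ` {..<L})) = {[0..<n] ! i | i. i < n \<and> i \<in> w ` {..<L}}"
    by (simp add: set_nths)
  also have "\<dots> = {i. i < n \<and> i \<in> w ` {..<L}}"
  proof (rule set_eqI)
    fix x
    show "x \<in> {[0..<n] ! i | i. i < n \<and> i \<in> w ` {..<L}} \<longleftrightarrow> x \<in> {i. i < n \<and> i \<in> w ` {..<L}}"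
    proof
      assume "x \<in> {[0..<n] ! i | i. i < n \<and> i \<in> w ` {..<L}}"
      then show "x \<in> {i. i < n \<and> i \<in> w ` {..<L}}" by auto
    next
      assume a: "x \<in> {i. i < n \<and> i \<in> w ` {..<L}}"
      then have "x = [0..<n] ! x" by simp
      then show "x \<in> {[0..<n] ! i | i. i < n \<and> i \<in> w ` {..<L}}" using a by blast
    qed
  qed
  also have "\<dots> = w ` {..<L}" using lt by auto
  finally show "set (nths [0..<n] (w ` {..<L})) = set (map w [0..<L])" by auto
qed

lemma length_nths_le: "length (nths xs A) \<le> length xs"
proof -
  have "{i. i < length xs \<and> i \<in> A} \<subseteq> {..<length xs}" by auto
  then have "card {i. i < length xs \<and> i \<in> A} \<le> card {..<length xs}" by (intro card_mono) simp_all
  then show ?thesis by (simp add: length_nths)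
qed

lemma al_ge:
  assumes perm: "is_perm p" and split: "p = xs @ ys"
    and mono: "\<And>i j. i < j \<Longrightarrow> j < L \<Longrightarrow> w i < w j"
    and ev: "\<And>t. t < L \<Longrightarrow> even t \<Longrightarrow> w t \<in> set ys"
    and od: "\<And>t. t < L \<Longrightarrow> odd t \<Longrightarrow> w t \<in> set xs"
  shows "L \<le> al p"
proof -
  define n where "n = length p"
  define q where "q = inv_perm p"
  have sp: "set p = {0..<n}" and dp: "distinct p" using perm by (auto simp: is_perm_def n_def)
  have wlt: "\<And>t. t < L \<Longrightarrow> w t < n"
  proof -
    fix t assume t: "t < L"
    have "w t \<in> set p" using ev[OF t] od[OF t] split by (cases "even t") auto
    then show "w t < n" using sp by auto
  qed
  have qp: "\<And>v. v < n \<Longrightarrow> q ! v < n \<and> p ! (q ! v) = v"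
    using inv_perm_prop[OF perm] by (simp add: q_def n_def)
  have qys: "\<And>v. v \<in> set ys \<Longrightarrow> length xs \<le> q ! v"
  proof (rule ccontr)
    fix v assume v: "v \<in> set ys" "\<not> length xs \<le> q ! v"
    have "v < n" using v(1) split sp by auto
    then have "p ! (q ! v) = v" using qp by blast
    then have "xs ! (q ! v) = v" using v(2) split by (simp add: nth_append)
    then have "v \<in> set xs" using v(2) by (metis not_le nth_mem)
    then show False using v(1) dp split by auto
  qed
  have qxs: "\<And>v. v \<in> set xs \<Longrightarrow> q ! v < length xs"
  proof (rule ccontr)
    fix v assume v: "v \<in> set xs" "\<not> q ! v < length xs"
    have vn: "v < n" using v(1) split sp by auto
    then have "p ! (q ! v) = v" "q ! v < n" using qp by blast+
    then have "ys ! (q ! v - length xs) = v" using v(2) split by (simp add: nth_append)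
    moreover have "q ! v - length xs < length ys" using \<open>q ! v < n\<close> split n_def v(2) by simp
    ultimately have "v \<in> set ys" by (metis nth_mem)
    then show False using v(1) dp split by auto
  qed
  define z where "z = map (\<lambda>t. q ! w t) [0..<L]"
  define s where "s = std z"
  have qinj: "\<And>a b. a < n \<Longrightarrow> b < n \<Longrightarrow> q ! a = q ! b \<Longrightarrow> a = b" using qp by metis
  have winj: "\<And>i j. i < L \<Longrightarrow> j < L \<Longrightarrow> w i = w j \<Longrightarrow> i = j"
    using mono by (metis linorder_neqE_nat less_irrefl)
  have "inj_on (\<lambda>t. q ! w t) {0..<L}"
  proof (rule inj_onI)
    fix a b assume ab: "a \<in> {0..<L}" "b \<in> {0..<L}" "q ! w a = q ! w b"
    then have "w a = w b" using qinj[OF wlt wlt] by simp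
    then show "a = b" using winj ab by simp
  qed
  then have dz: "distinct z" unfolding z_def by (simp add: distinct_map)
  have "nths q (w ` {..<L}) = z"
  proof -
    have "q = map (\<lambda>v. q ! v) [0..<n]" using map_nth[of q] by (simp add: q_def n_def)
    then have "nths q (w ` {..<L}) = map (\<lambda>v. q ! v) (nths [0..<n] (w ` {..<L}))"
      by (metis nths_map)
    also have "\<dots> = z" using nths_upt_mono[OF mono wlt] by (simp add: z_def)
    finally show ?thesis .
  qed
  then have rs: "restr q (w ` {..<L}) = s" by (simp add: restr_def s_def)
  have "w ` {..<L} \<subseteq> {..<length q}" using wlt by (auto simp: q_def n_def)
  then have cont: "contained s q" unfolding contained_def using rs by blast
  have ps: "is_perm s" using std_perm[OF dz] by (simp add: s_def)
  have alt: "alternating s"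
    unfolding alternating_def
  proof (intro allI impI)
    fix i j assume a: "i < length s \<and> j < length s \<and> even i \<and> odd j"
    then have ij: "i < L" "j < L" "even i" "odd j" by (auto simp: s_def z_def)
    have "q ! w j < length xs" using qxs od ij by blast
    moreover have "length xs \<le> q ! w i" using qys ev ij by blast
    ultimately have "z ! j < z ! i" using ij by (simp add: z_def)
    then show "s ! j < s ! i" using std_less_iff[OF dz] ij by (simp add: s_def z_def)
  qed
  have ls: "length s = L" by (simp add: s_def z_def)
  define S where "S = {length s | s. is_perm s \<and> alternating s \<and> (contained s p \<or> contained s (inv_perm p))}"
  have "S \<subseteq> {..n}"
  proof
    fix x assume "x \<in> S"
    then obtain s' where s': "x = length s'" "contained s' p \<or> contained s' (inv_perm p)"
      by (auto simp: S_def)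
    then obtain A where "s' = restr p A \<or> s' = restr (inv_perm p) A" by (auto simp: contained_def)
    then have "length s' \<le> n"
    proof
      assume "s' = restr p A"
      then show ?thesis using length_nths_le[of p A] by (simp add: restr_def n_def)
    next
      assume "s' = restr (inv_perm p) A"
      then show ?thesis using length_nths_le[of "inv_perm p" A] by (simp add: restr_def n_def)
    qed
    then show "x \<in> {..n}" using s' by simp
  qed
  then have finS: "finite S" by (rule finite_subset) simp
  have "contained s (inv_perm p)" using cont by (simp add: q_def)
  then have "L \<in> S" unfolding S_def using ps alt ls by blast
  moreover have "al p = Max S" by (simp add: al_def S_def)
  ultimately show ?thesis using finS by simp
qed


lemma mono_from_step:
  assumes "\<And>t. Suc t < L \<Longrightarrow> f t < (f (Suc t) :: nat)"
  shows "i < j \<Longrightarrow> j < L \<Longrightarrow> f i < f j"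
proof (induction j)
  case 0 then show ?case by simp
next
  case (Suc j)
  show ?case
  proof (cases "i = j")
    case True then show ?thesis using assms Suc.prems by simp
  next
    case False
    then have "f i < f j" using Suc by simp
    also have "f j < f (Suc j)" using assms Suc.prems by simp
    finally show ?thesis .
  qed
qed

lemma sorted_distinct_less:
  assumes "sorted xs" "distinct xs" "i < j" "j < length xs"
  shows "xs ! i < (xs ! j :: nat)"
proof -
  have "xs ! i \<le> xs ! j" using assms by (simp add: sorted_iff_nth_mono)
  moreover have "xs ! i \<noteq> xs ! j" using assms by (simp add: nth_eq_iff_index_eq)
  ultimately show ?thesis by simp
qed

lemma interleave1:
  assumes perm: "is_perm p" and split: "p = xs @ ys"
    and B: "B \<subseteq> {v. v \<in> set xs \<and> v + 1 \<in> set ys}"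
  shows "card B \<le> al p"
proof -
  have disj: "set xs \<inter> set ys = {}" using perm split by (auto simp: is_perm_def)
  have finB: "finite B" using B by (rule finite_subset) auto
  define vs where "vs = sorted_list_of_set B"
  have svs: "set vs = B" "sorted vs" "distinct vs" "length vs = card B" using finB by (auto simp: vs_def)
  define w where "w t = (if even t then vs ! t + 1 else vs ! t)" for t
  have vB: "\<And>t. t < card B \<Longrightarrow> vs ! t \<in> B" using svs by (metis nth_mem)
  have step: "\<And>t. Suc t < card B \<Longrightarrow> w t < w (Suc t)"
  proof -
    fix t assume t: "Suc t < card B"
    have lt: "vs ! t < vs ! Suc t" using sorted_distinct_less[OF svs(2,3)] t svs(4) by simp
    show "w t < w (Suc t)"
    proof (cases "even t")
      case True
      have "vs ! t + 1 \<in> set ys" using vB[of t] B t by auto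
      moreover have "vs ! Suc t \<in> set xs" using vB[of "Suc t"] B t by auto
      ultimately have "vs ! t + 1 \<noteq> vs ! Suc t" using disj by auto
      then show ?thesis using lt True by (simp add: w_def)
    next
      case False
      then show ?thesis using lt by (simp add: w_def)
    qed
  qed
  show ?thesis
  proof (rule al_ge[OF perm split])
    show "\<And>i j. i < j \<Longrightarrow> j < card B \<Longrightarrow> w i < w j" using mono_from_step[of "card B" w, OF step] by blast
    show "\<And>t. t < card B \<Longrightarrow> even t \<Longrightarrow> w t \<in> set ys" using vB B by (auto simp: w_def)
    show "\<And>t. t < card B \<Longrightarrow> odd t \<Longrightarrow> w t \<in> set xs" using vB B by (auto simp: w_def)
  qed
qed

lemma interleave2:
  assumes perm: "is_perm p" and split: "p = xs @ ys"
    and B: "B \<subseteq> {v. v \<in> set ys \<and> v + 1 \<in> set xs}"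
  shows "card B \<le> al p"
proof -
  have disj: "set xs \<inter> set ys = {}" using perm split by (auto simp: is_perm_def)
  have finB: "finite B" using B by (rule finite_subset) auto
  define vs where "vs = sorted_list_of_set B"
  have svs: "set vs = B" "sorted vs" "distinct vs" "length vs = card B" using finB by (auto simp: vs_def)
  define w where "w t = (if even t then vs ! t else vs ! t + 1)" for t
  have vB: "\<And>t. t < card B \<Longrightarrow> vs ! t \<in> B" using svs by (metis nth_mem)
  have step: "\<And>t. Suc t < card B \<Longrightarrow> w t < w (Suc t)"
  proof -
    fix t assume t: "Suc t < card B"
    have lt: "vs ! t < vs ! Suc t" using sorted_distinct_less[OF svs(2,3)] t svs(4) by simp
    show "w t < w (Suc t)"
    proof (cases "even t")
      case False
      have "vs ! t + 1 \<in> set xs" using vB[of t] B t by auto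
      moreover have "vs ! Suc t \<in> set ys" using vB[of "Suc t"] B t by auto
      ultimately have "vs ! t + 1 \<noteq> vs ! Suc t" using disj by auto
      then show ?thesis using lt False by (simp add: w_def)
    next
      case True
      then show ?thesis using lt by (simp add: w_def)
    qed
  qed
  show ?thesis
  proof (rule al_ge[OF perm split])
    show "\<And>i j. i < j \<Longrightarrow> j < card B \<Longrightarrow> w i < w j" using mono_from_step[of "card B" w, OF step] by blast
    show "\<And>t. t < card B \<Longrightarrow> even t \<Longrightarrow> w t \<in> set ys" using vB B by (auto simp: w_def)
    show "\<And>t. t < card B \<Longrightarrow> odd t \<Longrightarrow> w t \<in> set xs" using vB B by (auto simp: w_def)
  qed
qed

lemma seg_in_take:
  "i < length segs \<Longrightarrow> i < c \<Longrightarrow> set (segs ! i) \<subseteq> set (concat (take c segs))"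
proof -
  assume a: "i < length segs" "i < c"
  then have "take c segs ! i = segs ! i" "i < length (take c segs)" by auto
  then have "segs ! i \<in> set (take c segs)" by (metis nth_mem)
  then show ?thesis by auto
qed

lemma seg_in_drop:
  "i < length segs \<Longrightarrow> c \<le> i \<Longrightarrow> set (segs ! i) \<subseteq> set (concat (drop c segs))"
proof -
  assume a: "i < length segs" "c \<le> i"
  then have "drop c segs ! (i - c) = segs ! i" "i - c < length (drop c segs)" by auto
  then have "segs ! i \<in> set (drop c segs)" by (metis nth_mem)
  then show ?thesis by auto
qed

lemma pair_bound:
  assumes perm: "is_perm p" and cs: "concat segs = p" and j: "j < length segs" and l: "l < length segs"
    and jl: "j \<noteq> l"
  shows "card {v. v \<in> set (segs ! j) \<and> v + 1 \<in> set (segs ! l)} \<le> al p"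
proof (cases "j < l")
  case True
  define xs where "xs = concat (take (Suc j) segs)"
  define ys where "ys = concat (drop (Suc j) segs)"
  have split: "p = xs @ ys" using cs by (simp add: xs_def ys_def flip: concat_append)
  have "set (segs ! j) \<subseteq> set xs" using seg_in_take[OF j] by (simp add: xs_def)
  moreover have "set (segs ! l) \<subseteq> set ys" using seg_in_drop[OF l] True by (simp add: ys_def)
  ultimately show ?thesis by (intro interleave1[OF perm split]) auto
next
  case False
  then have lj: "l < j" using jl by simp
  define xs where "xs = concat (take (Suc l) segs)"
  define ys where "ys = concat (drop (Suc l) segs)"
  have split: "p = xs @ ys" using cs by (simp add: xs_def ys_def flip: concat_append)
  have "set (segs ! l) \<subseteq> set xs" using seg_in_take[OF l] by (simp add: xs_def)
  moreover have "set (segs ! j) \<subseteq> set ys" using seg_in_drop[OF j] lj by (simp add: ys_def)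
  ultimately show ?thesis by (intro interleave2[OF perm split]) auto
qed

lemma X_bound:
  assumes perm: "is_perm p" and cs: "concat segs = p" and j: "j < length segs"
    and alK: "al p < K" and rK: "length segs < K"
  shows "card {v \<in> set (segs ! j). v + 1 < length p \<and> v + 1 \<notin> set (segs ! j)} \<le> K * K"
proof -
  define r where "r = length segs"
  define I where "I = {l. l < r \<and> l \<noteq> j}"
  define B where "B l = {v. v \<in> set (segs ! j) \<and> v + 1 \<in> set (segs ! l)}" for l
  define X where "X = {v \<in> set (segs ! j). v + 1 < length p \<and> v + 1 \<notin> set (segs ! j)}"
  have sp: "set p = {0..<length p}" using perm by (simp add: is_perm_def)
  have "X \<subseteq> (\<Union>l\<in>I. B l)"
  proof
    fix v assume v: "v \<in> X"
    then have "v + 1 \<in> set p" using sp by (auto simp: X_def)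
    then have "v + 1 \<in> set (concat segs)" using cs by simp
    then obtain sg where sg: "sg \<in> set segs" "v + 1 \<in> set sg" by auto
    then obtain l where "l < r" "segs ! l = sg" by (auto simp: r_def in_set_conv_nth)
    then have l: "l < r" "v + 1 \<in> set (segs ! l)" using sg by auto
    moreover have "l \<noteq> j" using v l by (auto simp: X_def)
    ultimately show "v \<in> (\<Union>l\<in>I. B l)" using v by (auto simp: I_def B_def X_def)
  qed
  moreover have finI: "finite I" by (simp add: I_def)
  moreover have finB: "\<And>l. finite (B l)" by (simp add: B_def)
  ultimately have "card X \<le> card (\<Union>l\<in>I. B l)" by (intro card_mono) auto
  also have "\<dots> \<le> (\<Sum>l\<in>I. card (B l))" by (rule card_UN_le[OF finI])
  also have "\<dots> \<le> (\<Sum>l\<in>I. K)"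
  proof (rule sum_mono)
    fix l assume "l \<in> I"
    then have "card (B l) \<le> al p" unfolding B_def using pair_bound[OF perm cs j] by (auto simp: I_def r_def)
    then show "card (B l) \<le> K" using alK by simp
  qed
  also have "\<dots> = card I * K" by simp
  also have "\<dots> \<le> K * K"
  proof -
    have "I \<subseteq> {..<r}" by (auto simp: I_def)
    then have "card I \<le> r" by (metis card_lessThan card_mono finite_lessThan)
    then show ?thesis using rK r_def by simp
  qed
  finally show ?thesis by (simp add: X_def)
qed

lemma sum_list_bound:
  "\<forall>x\<in>set xs. f x \<le> (c::nat) \<Longrightarrow> sum_list (map f xs) \<le> length xs * c"
  by (induction xs) auto


lemma infl:
  assumes perm: "is_perm p" and cs: "concat us = p"
    and U: "\<forall>u\<in>set us. u \<noteq> [] \<and> set u = {Min (set u)..<Min (set u) + length u}"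
  shows "is_perm (std (map (\<lambda>u. Min (set u)) us)) \<and>
         inflate (std (map (\<lambda>u. Min (set u)) us)) (map std us) = p"
proof -
  define m where "m = length us"
  define lo where "lo i = Min (set (us ! i))" for i
  define n where "n = length p"
  have sp: "set p = {0..<n}" and dp: "distinct p" using perm by (auto simp: is_perm_def n_def)
  have dcon: "distinct (concat us)" using cs dp by simp
  have dus: "distinct us" using distinct_blocks[OF dcon] U by blast
  have disj: "\<And>i j x. i < m \<Longrightarrow> j < m \<Longrightarrow> i \<noteq> j \<Longrightarrow> x \<in> set (us ! i) \<Longrightarrow> x \<in> set (us ! j) \<Longrightarrow> False"
  proof -
    fix i j x assume a: "i < m" "j < m" "i \<noteq> j" "x \<in> set (us ! i)" "x \<in> set (us ! j)"
    have "us ! i \<in> set us" "us ! j \<in> set us" using a by (auto simp: m_def)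
    then have "us ! i = us ! j" using block_unique[OF dcon] a(4,5) by blast
    then show False using a dus by (simp add: m_def nth_eq_iff_index_eq)
  qed
  have ne: "\<And>i. i < m \<Longrightarrow> us ! i \<noteq> []" using U by (auto simp: m_def)
  have loin: "\<And>i. i < m \<Longrightarrow> lo i \<in> set (us ! i)"
    unfolding lo_def using ne by (intro Min_in) auto
  have ivl: "\<And>i. i < m \<Longrightarrow> set (us ! i) = {lo i..<lo i + length (us ! i)}"
    using U by (auto simp: m_def lo_def)
  define L where "L = map (\<lambda>u. Min (set u)) us"
  have Lnth: "\<And>i. i < m \<Longrightarrow> L ! i = lo i" by (simp add: L_def lo_def m_def)
  have lL: "length L = m" by (simp add: L_def m_def)
  have dL: "distinct L"
  proof (rule distinct_conv_nth[THEN iffD2], intro allI impI)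
    fix i j assume a: "i < length L" "j < length L" "i \<noteq> j"
    show "L ! i \<noteq> L ! j"
    proof
      assume "L ! i = L ! j"
      then have "lo i = lo j" using a lL Lnth by simp
      moreover have "lo i \<in> set (us ! i)" "lo j \<in> set (us ! j)" using loin a lL by auto
      ultimately show False using disj[of i j "lo i"] a lL by simp
    qed
  qed
  define \<sigma> where "\<sigma> = std L"
  have ps: "is_perm \<sigma>" using std_perm[OF dL] by (simp add: \<sigma>_def)
  have ls: "length \<sigma> = m" by (simp add: \<sigma>_def lL)
  have sless: "\<And>i l. i < m \<Longrightarrow> l < m \<Longrightarrow> \<sigma> ! l < \<sigma> ! i \<longleftrightarrow> lo l < lo i"
    using std_less_iff[OF dL] lL Lnth by (simp add: \<sigma>_def)
  define ts where "ts = map std us"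
  have off: "\<And>i. i < m \<Longrightarrow>
     sum_list (map (\<lambda>l. length (ts ! l)) (filter (\<lambda>l. \<sigma> ! l < \<sigma> ! i) [0..<length \<sigma>])) = lo i"
  proof -
    fix i assume i: "i < m"
    define I where "I = {l. l < m \<and> lo l < lo i}"
    have "filter (\<lambda>l. \<sigma> ! l < \<sigma> ! i) [0..<length \<sigma>] = filter (\<lambda>l. lo l < lo i) [0..<m]"
      using sless i ls by (intro filter_cong) auto
    then have "sum_list (map (\<lambda>l. length (ts ! l)) (filter (\<lambda>l. \<sigma> ! l < \<sigma> ! i) [0..<length \<sigma>]))
        = sum_list (map (\<lambda>l. length (ts ! l)) (filter (\<lambda>l. lo l < lo i) [0..<m]))" by simp
    also have "\<dots> = (\<Sum>l\<in>I. length (ts ! l))"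
      by (subst sum_list_distinct_conv_sum_set) (auto simp: I_def intro!: sum.cong)
    also have "\<dots> = (\<Sum>l\<in>I. card (set (us ! l)))"
    proof (rule sum.cong)
      fix l assume "l \<in> I"
      then have "l < m" by (simp add: I_def)
      moreover have "distinct (us ! l)" using dcon \<open>l < m\<close> by (simp add: m_def distinct_concat_iff)
      ultimately show "length (ts ! l) = card (set (us ! l))"
        by (simp add: ts_def m_def distinct_card)
    qed simp
    also have "\<dots> = card (\<Union>l\<in>I. set (us ! l))"
    proof (rule card_UN_disjoint[symmetric])
      show "finite I" by (simp add: I_def)
      show "\<forall>l\<in>I. finite (set (us ! l))" by simp
      show "\<forall>l\<in>I. \<forall>l'\<in>I. l \<noteq> l' \<longrightarrow> set (us ! l) \<inter> set (us ! l') = {}"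
        using disj by (auto simp: I_def)
    qed
    also have "(\<Union>l\<in>I. set (us ! l)) = {..<lo i}"
    proof
      show "(\<Union>l\<in>I. set (us ! l)) \<subseteq> {..<lo i}"
      proof
        fix x assume "x \<in> (\<Union>l\<in>I. set (us ! l))"
        then obtain l where l: "l < m" "lo l < lo i" "x \<in> set (us ! l)" by (auto simp: I_def)
        show "x \<in> {..<lo i}"
        proof (rule ccontr)
          assume "x \<notin> {..<lo i}"
          then have "lo i \<le> x" by simp
          moreover have "x < lo l + length (us ! l)" using ivl[OF l(1)] l(3) by auto
          ultimately have "lo i \<in> set (us ! l)" using ivl[OF l(1)] l(2) by auto
          moreover have "l \<noteq> i" using l(2) by auto
          ultimately show False using disj[OF l(1) i] loin[OF i] by blast
        qed
      qed
    next
      show "{..<lo i} \<subseteq> (\<Union>l\<in>I. set (us ! l))"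
      proof
        fix y assume y: "y \<in> {..<lo i}"
        have "us ! i \<in> set us" using i by (simp add: m_def)
        then have "lo i \<in> set (concat us)" using loin[OF i] by auto
        then have "lo i \<in> set p" using cs by simp
        then have "y < n" using y sp by auto
        then have "y \<in> set (concat us)" using sp cs by simp
        then obtain u where u: "u \<in> set us" "y \<in> set u" by auto
        then obtain l where l: "l < m" "us ! l = u" by (auto simp: m_def in_set_conv_nth)
        have "lo l \<le> y" using u l by (simp add: lo_def)
        then have "l \<in> I" using y l by (simp add: I_def)
        then show "y \<in> (\<Union>l\<in>I. set (us ! l))" using u l by auto
      qed
    qed
    finally show "sum_list (map (\<lambda>l. length (ts ! l)) (filter (\<lambda>l. \<sigma> ! l < \<sigma> ! i) [0..<length \<sigma>])) = lo i"
      by simp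
  qed
  have blk: "\<And>i. i < m \<Longrightarrow> map (\<lambda>v. v + lo i) (ts ! i) = us ! i"
  proof -
    fix i assume i: "i < m"
    have "ts ! i = map (\<lambda>x. x - lo i) (us ! i)"
      using std_interval[OF ivl[OF i]] i by (simp add: ts_def m_def)
    moreover have "\<And>x. x \<in> set (us ! i) \<Longrightarrow> x - lo i + lo i = x" using ivl[OF i] by auto
    ultimately show "map (\<lambda>v. v + lo i) (ts ! i) = us ! i" by (simp add: map_idI)
  qed
  have off2: "\<And>i. i < m \<Longrightarrow>
     sum_list (map (\<lambda>l. length (ts ! l)) (filter (\<lambda>l. \<sigma> ! l < \<sigma> ! i) [0..<m])) = lo i"
    using off ls by simp
  have "inflate \<sigma> ts = concat (map (\<lambda>i. us ! i) [0..<m])"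
    unfolding inflate_def ls
    by (rule arg_cong[where f = concat], rule map_cong) (auto simp: off2 blk)
  also have "\<dots> = p" using map_nth[of us] cs by (simp add: m_def)
  finally show ?thesis using ps by (simp add: \<sigma>_def L_def ts_def)
qed


lemma concat_concat_map': "concat (concat (map f xs)) = concat (map (\<lambda>s. concat (f s)) xs)"
  by (induction xs) auto

lemma main_k2:
  assumes k: "2 \<le> k" and perm: "is_perm p" and alK: "al p < K" and gK: "greedy k p < K"
  shows "\<exists>us. concat us = p \<and> length us \<le> K * (1 + (k + 1) * (K * K)) \<and>
    (\<forall>u\<in>set us. u \<noteq> [] \<and> set u = {Min (set u)..<Min (set u) + length u} \<and> std u \<in> H_plus k \<union> H_minus k)"
proof -
  obtain segs where segs: "length segs = greedy k p" "concat segs = p"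
     "\<forall>s\<in>set segs. s \<noteq> [] \<and> std s \<in> H_plus k \<union> H_minus k"
    using greedy_segs[OF k] by blast
  define n where "n = length p"
  have sp: "set p = {0..<n}" and dp: "distinct p" using perm by (auto simp: is_perm_def n_def)
  have rK: "length segs < K" using segs gK by simp
  define c where "c = 1 + (k + 1) * (K * K)"
  define Pr where "Pr s us \<longleftrightarrow> concat us = s \<and> length us \<le> c \<and>
    (\<forall>u\<in>set us. u \<noteq> [] \<and> set u = {Min (set u)..<Min (set u) + length u} \<and> std u \<in> H_plus k \<union> H_minus k)"
    for s us
  have ex: "\<And>s. s \<in> set segs \<Longrightarrow> \<exists>us. Pr s us"
  proof -
    fix s assume s: "s \<in> set segs"
    then obtain j where j: "j < length segs" "segs ! j = s" by (auto simp: in_set_conv_nth)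
    have ds: "distinct s" using dp segs(2) s by (auto simp: distinct_concat_iff)
    have ss: "set s \<subseteq> {..<n}" using sp segs(2) s by auto
    have Hs: "std s \<in> H_plus k \<union> H_minus k" using segs(3) s by blast
    obtain us where us: "concat us = s"
      "length us \<le> 1 + (k + 1) * card {v \<in> set s. v + 1 < n \<and> v + 1 \<notin> set s}"
      "\<forall>u\<in>set us. u \<noteq> [] \<and> set u = {Min (set u)..<Min (set u) + length u} \<and> std u \<in> H_plus k \<union> H_minus k"
      using segment_units[OF k ds ss Hs] by blast
    have "card {v \<in> set s. v + 1 < n \<and> v + 1 \<notin> set s} \<le> K * K"
      using X_bound[OF perm segs(2) j(1) alK rK] j(2) by (simp add: n_def)
    then have "(k + 1) * card {v \<in> set s. v + 1 < n \<and> v + 1 \<notin> set s} \<le> (k + 1) * (K * K)"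
      by (rule mult_le_mono2)
    then have "length us \<le> c" using us(2) by (simp add: c_def)
    then show "\<exists>us. Pr s us" using us by (auto simp: Pr_def)
  qed
  define f where "f s = (SOME us. Pr s us)" for s
  have fP: "\<And>s. s \<in> set segs \<Longrightarrow> Pr s (f s)" unfolding f_def using ex by (rule someI_ex)
  define us where "us = concat (map f segs)"
  have "concat us = concat (map (\<lambda>s. concat (f s)) segs)" by (simp add: us_def concat_concat_map')
  also have "\<dots> = concat (map (\<lambda>s. s) segs)"
    by (rule arg_cong[where f = concat], rule map_cong) (use fP in \<open>auto simp: Pr_def\<close>)
  also have "\<dots> = p" using segs(2) by simp
  finally have cus: "concat us = p" .
  have "length us = sum_list (map (\<lambda>s. length (f s)) segs)" by (simp add: us_def length_concat comp_def)
  also have "\<dots> \<le> length segs * c"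
    by (rule sum_list_bound) (use fP in \<open>auto simp: Pr_def\<close>)
  also have "\<dots> \<le> K * c" using rK by simp
  finally have lus: "length us \<le> K * (1 + (k + 1) * (K * K))" by (simp add: c_def)
  have "\<forall>u\<in>set us. u \<noteq> [] \<and> set u = {Min (set u)..<Min (set u) + length u} \<and> std u \<in> H_plus k \<union> H_minus k"
  proof
    fix u assume "u \<in> set us"
    then obtain s where "s \<in> set segs" "u \<in> set (f s)" by (auto simp: us_def)
    then show "u \<noteq> [] \<and> set u = {Min (set u)..<Min (set u) + length u} \<and> std u \<in> H_plus k \<union> H_minus k"
      using fP by (auto simp: Pr_def)
  qed
  then show ?thesis using cus lus by blast
qed

theorem mainTheorem6:
  fixes k K :: nat
  assumes "1 \<le> k"
  shows "\<exists>P. finite P \<and> (\<forall>s \<in> P. is_perm s) \<and>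
           {p. is_perm p \<and> al p < K \<and> s_k k p < enat K}
             \<subseteq> inflations P (H_plus k \<union> H_minus k)"
proof (cases "k = 1")
  case True
  then have E: "{p. is_perm p \<and> al p < K \<and> s_k k p < enat K} = {}" by (simp add: s_k_def)
  show ?thesis by (rule exI[of _ "{}"]) (simp only: E, simp)
next
  case False
  then have k: "2 \<le> k" using assms by simp
  define M where "M = K * (1 + (k + 1) * (K * K))"
  define P where "P = {\<sigma>. is_perm \<sigma> \<and> length \<sigma> \<le> M}"
  have "P \<subseteq> {xs. set xs \<subseteq> {..<M} \<and> length xs \<le> M}"
    by (auto simp: P_def is_perm_def)
  then have finP: "finite P" by (rule finite_subset) (rule finite_lists_length_le, simp)
  have "{p. is_perm p \<and> al p < K \<and> s_k k p < enat K} \<subseteq> inflations P (H_plus k \<union> H_minus k)"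
  proof
    fix p assume "p \<in> {p. is_perm p \<and> al p < K \<and> s_k k p < enat K}"
    then have p: "is_perm p" "al p < K" "greedy k p < K" using k by (auto simp: s_k_def)
    obtain us where us: "concat us = p" "length us \<le> M"
      "\<forall>u\<in>set us. u \<noteq> [] \<and> set u = {Min (set u)..<Min (set u) + length u} \<and> std u \<in> H_plus k \<union> H_minus k"
      using main_k2[OF k p] by (auto simp: M_def)
    define \<sigma> where "\<sigma> = std (map (\<lambda>u. Min (set u)) us)"
    have inf: "is_perm \<sigma>" "inflate \<sigma> (map std us) = p"
      using infl[OF p(1) us(1)] us(3) by (auto simp: \<sigma>_def)
    have "\<sigma> \<in> P" using inf(1) us(2) by (simp add: P_def \<sigma>_def)
    moreover have "length (map std us) = length \<sigma>" by (simp add: \<sigma>_def)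
    moreover have "\<forall>t\<in>set (map std us). t \<in> H_plus k \<union> H_minus k \<and> is_perm t \<and> t \<noteq> []"
    proof
      fix t assume "t \<in> set (map std us)"
      then obtain u where u: "u \<in> set us" "t = std u" by auto
      have "distinct p" using p(1) by (simp add: is_perm_def)
      then have "distinct u" using us(1) u(1) by (auto simp: distinct_concat_iff)
      then show "t \<in> H_plus k \<union> H_minus k \<and> is_perm t \<and> t \<noteq> []"
        using us(3) u std_perm[of u] by (auto simp: std_def)
    qed
    ultimately show "p \<in> inflations P (H_plus k \<union> H_minus k)"
      unfolding inflations_def using inf by blast
  qed
  moreover have "\<forall>s\<in>P. is_perm s" by (simp add: P_def)
  ultimately show ?thesis using finP by blast
qed

end
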